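(* Let $C=(c_{ij})$ be an extreme point of $\mathcal{E}_n$. Define the $2n\times 2n$ real symmetric matrix $$P_C=\sum_{i,j=1}^n\frac14\begin{pmatrix}1+c_{ij}&1-c_{ij}\\ 1-c_{ij}&1+c_{ij}\end{pmatrix}\otimes e_ie_j^{\sf T},$$ where $e_1,\ldots,e_n$ is the standard basis of $\mathbb{R}^n$ and $\otimes$ is the Kronecker product. Then $P_C$ is completely positive semidefinite and $\mathrm{cpsd\text{-}rank}(P_C)\ge 2^{\lfloor \mathrm{rank}(C)/2\rfloor}$.
   Context: $\mathcal{E}_n$ is the elliptope: the set of real symmetric positive semidefinite $n\times n$ matrices with all diagonal entries equal to $1$; an extreme point is a point not expressible as a proper convex combination of two distinct points of $\mathcal{E}_n$. A symmetric $N\times N$ matrix $X$ is completely positive semidefinite (cpsd) if there exist $d\ge1$ and $d\times d$ complex Hermitian positive semidefinite matrices $P_1,\ldots,P_N$ with $X_{ij}=\mathrm{Tr}(P_iP_j)$ for all $i,j\in\{1,\ldots,N\}$. The cpsd-rank of a cpsd matrix $X$ is the least such $d$. *)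

theory Defs
  imports "HOL-Analysis.Analysis"
begin

definition psd_real :: "real^'n^'n \<Rightarrow> bool" where
  "psd_real A \<longleftrightarrow> transpose A = A \<and> (\<forall>x. 0 \<le> x \<bullet> (A *v x))"

definition elliptope :: "(real^'n^'n) set" where
  "elliptope = {C. psd_real C \<and> (\<forall>i. C $ i $ i = 1)}"

text \<open>Kronecker product, rows/columns indexed by pairs (a,i) in lexicographic order.\<close>
definition kron :: "real^'m^'m \<Rightarrow> real^'n^'n \<Rightarrow> real^('m \<times> 'n)^('m \<times> 'n)" where
  "kron A B = (\<chi> p q. A $ fst p $ fst q * B $ snd p $ snd q)"

definition unit_mat :: "'n \<Rightarrow> 'n \<Rightarrow> real^'n^'n" where
  "unit_mat i j = (\<chi> k l. if k = i \<and> l = j then 1 else 0)"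

definition blk :: "real \<Rightarrow> real^2^2" where
  "blk c = (\<chi> a b. (1/4) * (if a = b then 1 + c else 1 - c))"

definition P_mat :: "real^'n^'n \<Rightarrow> real^(2 \<times> 'n)^(2 \<times> 'n)" where
  "P_mat C = (\<Sum>i\<in>UNIV. \<Sum>j\<in>UNIV. kron (blk (C $ i $ j)) (unit_mat i j))"

text \<open>Complex d x d matrices are represented as functions nat => nat => complex,
  only entries with indices < d being relevant.  Hermitian PSD:\<close>
definition herm_psd :: "nat \<Rightarrow> (nat \<Rightarrow> nat \<Rightarrow> complex) \<Rightarrow> bool" where
  "herm_psd d P \<longleftrightarrow> (\<forall>k<d. \<forall>l<d. P k l = cnj (P l k)) \<and>
     (\<forall>v::nat \<Rightarrow> complex. let q = (\<Sum>k<d. \<Sum>l<d. cnj (v k) * P k l * v l) in Im q = 0 \<and> 0 \<le> Re q)"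

definition tr_prod :: "nat \<Rightarrow> (nat \<Rightarrow> nat \<Rightarrow> complex) \<Rightarrow> (nat \<Rightarrow> nat \<Rightarrow> complex) \<Rightarrow> complex" where
  "tr_prod d P Q = (\<Sum>k<d. \<Sum>l<d. P k l * Q l k)"

definition cpsd_factorization :: "real^'k^'k \<Rightarrow> nat \<Rightarrow> bool" where
  "cpsd_factorization X d \<longleftrightarrow> d \<ge> 1 \<and> (\<exists>P :: 'k \<Rightarrow> nat \<Rightarrow> nat \<Rightarrow> complex.
      (\<forall>i. herm_psd d (P i)) \<and> (\<forall>i j. complex_of_real (X $ i $ j) = tr_prod d (P i) (P j)))"

definition cpsd :: "real^'k^'k \<Rightarrow> bool" where
  "cpsd X \<longleftrightarrow> transpose X = X \<and> (\<exists>d. cpsd_factorization X d)"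

definition cpsd_rank :: "real^'k^'k \<Rightarrow> nat" where
  "cpsd_rank X = (LEAST d. cpsd_factorization X d)"

end

theory Submission
  imports Defs "HOL-Library.Function_Algebras"
begin

type_synonym cm = "nat \<Rightarrow> nat \<Rightarrow> complex"

definition mm :: "nat \<Rightarrow> cm \<Rightarrow> cm \<Rightarrow> cm" where
  "mm d A B = (\<lambda>k l. if k < d \<and> l < d then (\<Sum>j<d. A k j * B j l) else 0)"
definition tr :: "nat \<Rightarrow> cm \<Rightarrow> complex" where
  "tr d A = (\<Sum>k<d. A k k)"
definition idm :: "nat \<Rightarrow> cm" where
  "idm d = (\<lambda>k l. if k < d \<and> l < d \<and> k = l then 1 else 0)"
definition sc :: "complex \<Rightarrow> cm \<Rightarrow> cm" where
  "sc c A = (\<lambda>k l. c * A k l)"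
definition adj :: "cm \<Rightarrow> cm" where
  "adj A = (\<lambda>k l. cnj (A l k))"
definition tc :: "nat \<Rightarrow> cm \<Rightarrow> bool" where
  "tc d A \<longleftrightarrow> (\<forall>k l. \<not> (k < d \<and> l < d) \<longrightarrow> A k l = 0)"
definition trunc :: "nat \<Rightarrow> cm \<Rightarrow> cm" where
  "trunc d A = (\<lambda>k l. if k < d \<and> l < d then A k l else 0)"

lemma fun_sum_apply2: "(\<Sum>i\<in>I. f i) k l = (\<Sum>i\<in>I. f i k l)" for f :: "'a \<Rightarrow> cm"
  by (induction I rule: infinite_finite_induct) auto

lemma tc_mm[simp]: "tc d (mm d A B)" unfolding tc_def mm_def by meson
lemma tc_idm[simp]: "tc d (idm d)" by (simp add: tc_def idm_def)
lemma tc_trunc[simp]: "tc d (trunc d A)" unfolding tc_def trunc_def by simp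
lemma tc_add[simp]: "tc d A \<Longrightarrow> tc d B \<Longrightarrow> tc d (A + B)" by (simp add: tc_def)
lemma tc_diff[simp]: "tc d A \<Longrightarrow> tc d B \<Longrightarrow> tc d (A - B)" by (simp add: tc_def)
lemma tc_sc[simp]: "tc d A \<Longrightarrow> tc d (sc c A)" by (simp add: tc_def sc_def)
lemma tc_zero[simp]: "tc d 0" by (simp add: tc_def)
lemma tc_adj[simp]: "tc d A \<Longrightarrow> tc d (adj A)" unfolding tc_def adj_def by auto
lemma tc_sum[simp]: "(\<And>i. i \<in> I \<Longrightarrow> tc d (f i)) \<Longrightarrow> tc d (\<Sum>i\<in>I. f i)"
  by (induction I rule: infinite_finite_induct) simp_all

lemma tc_eqI:
  assumes "tc d A" "tc d B" "\<And>k l. k < d \<Longrightarrow> l < d \<Longrightarrow> A k l = B k l" shows "A = B"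
proof (intro ext)
  fix k l show "A k l = B k l"
    using assms unfolding tc_def by (cases "k < d \<and> l < d") auto
qed

lemma mm_in: "k < d \<Longrightarrow> l < d \<Longrightarrow> mm d A B k l = (\<Sum>j<d. A k j * B j l)"
  by (simp add: mm_def)
lemma mm_out: "\<not> (k < d \<and> l < d) \<Longrightarrow> mm d A B k l = 0"
  unfolding mm_def by meson

lemma mm_assoc: "mm d (mm d A B) E = mm d A (mm d B E)"
proof (rule tc_eqI[OF tc_mm tc_mm])
  fix k l assume kl: "k < d" "l < d"
  have "mm d (mm d A B) E k l = (\<Sum>x<d. (\<Sum>j<d. A k j * B j x) * E x l)"
    using kl by (simp add: mm_in)
  also have "\<dots> = (\<Sum>x<d. A k x * (\<Sum>j<d. B x j * E j l))"
    unfolding sum_distrib_left sum_distrib_right mult.assoc by (rule sum.swap)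
  also have "\<dots> = mm d A (mm d B E) k l"
    using kl by (simp add: mm_in)
  finally show "mm d (mm d A B) E k l = mm d A (mm d B E) k l" .
qed

lemma mm_add_left: "mm d (A + B) E = mm d A E + mm d B E"
  by (intro ext) (auto simp: mm_def distrib_right sum.distrib)
lemma mm_add_right: "mm d E (A + B) = mm d E A + mm d E B"
  by (intro ext) (auto simp: mm_def distrib_left sum.distrib)
lemma mm_diff_left: "mm d (A - B) E = mm d A E - mm d B E"
  by (intro ext) (auto simp: mm_def left_diff_distrib sum_subtractf)
lemma mm_diff_right: "mm d E (A - B) = mm d E A - mm d E B"
  by (intro ext) (auto simp: mm_def right_diff_distrib sum_subtractf)
lemma mm_sc_left: "mm d (sc c A) E = sc c (mm d A E)"
  by (intro ext) (auto simp: mm_def sc_def sum_distrib_left mult.assoc)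
lemma mm_sc_right: "mm d E (sc c A) = sc c (mm d E A)"
  by (intro ext) (auto simp: mm_def sc_def sum_distrib_left mult.assoc mult.left_commute)
lemma mm_zero_left[simp]: "mm d 0 A = 0" by (simp add: mm_def fun_eq_iff)
lemma mm_zero_right[simp]: "mm d A 0 = 0" by (simp add: mm_def fun_eq_iff)
lemma mm_sum_left: "mm d (\<Sum>i\<in>I. f i) E = (\<Sum>i\<in>I. mm d (f i) E)"
proof (induction I rule: infinite_finite_induct)
  case (infinite A) then show ?case by (simp only: sum.infinite mm_zero_left not_False_eq_True)
next
  case empty then show ?case by (simp only: sum.empty mm_zero_left)
next
  case (insert x F) then show ?case by (simp only: sum.insert mm_add_left not_False_eq_True)
qed
lemma mm_sum_right: "mm d E (\<Sum>i\<in>I. f i) = (\<Sum>i\<in>I. mm d E (f i))"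
proof (induction I rule: infinite_finite_induct)
  case (infinite A) then show ?case by (simp only: sum.infinite mm_zero_right not_False_eq_True)
next
  case empty then show ?case by (simp only: sum.empty mm_zero_right)
next
  case (insert x F) then show ?case by (simp only: sum.insert mm_add_right not_False_eq_True)
qed

lemma idm_sum_left: "k < d \<Longrightarrow> (\<Sum>j<d. idm d k j * A j l) = A k l"
  by (simp add: idm_def if_distrib[of "\<lambda>x. x * _"] cong: if_cong)
lemma idm_sum_right: "l < d \<Longrightarrow> (\<Sum>j<d. A k j * idm d j l) = A k l"
  by (simp add: idm_def if_distrib[of "\<lambda>x. _ * x"] cong: if_cong)
lemma mm_idm_left_in: "k < d \<Longrightarrow> l < d \<Longrightarrow> mm d (idm d) A k l = A k l"
  by (subst mm_in, assumption, assumption) (rule idm_sum_left)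
lemma mm_idm_right_in: "k < d \<Longrightarrow> l < d \<Longrightarrow> mm d A (idm d) k l = A k l"
  by (subst mm_in, assumption, assumption) (rule idm_sum_right)
lemma mm_idm_left: "tc d A \<Longrightarrow> mm d (idm d) A = A"
  by (rule tc_eqI[of d]) (simp_all add: mm_idm_left_in)
lemma mm_idm_right: "tc d A \<Longrightarrow> mm d A (idm d) = A"
  by (rule tc_eqI[of d]) (simp_all add: mm_idm_right_in)

lemma sc_add: "sc c (A + B) = sc c A + sc c B" by (simp add: fun_eq_iff sc_def distrib_left)
lemma sc_diff: "sc c (A - B) = sc c A - sc c B" by (simp add: fun_eq_iff sc_def right_diff_distrib)
lemma sc_sc: "sc a (sc b A) = sc (a*b) A" by (simp add: fun_eq_iff sc_def)
lemma sc_one[simp]: "sc 1 A = A" by (simp add: fun_eq_iff sc_def)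
lemma sc_zero[simp]: "sc 0 A = 0" "sc c 0 = 0" by (simp_all add: fun_eq_iff sc_def)
lemma sc_sum: "sc c (\<Sum>i\<in>I. f i) = (\<Sum>i\<in>I. sc c (f i))"
  by (simp add: fun_eq_iff sc_def fun_sum_apply2 sum_distrib_left)
lemma sum_sc: "(\<Sum>i\<in>I. sc (f i) A) = sc (\<Sum>i\<in>I. f i) A"
  by (simp add: fun_eq_iff sc_def fun_sum_apply2 sum_distrib_right)
lemma sc_add_left: "sc (a + b) A = sc a A + sc b A" by (simp add: fun_eq_iff sc_def distrib_right)
lemma sc_minus1: "sc (-1) A = - A" by (simp add: fun_eq_iff sc_def)

lemma tr_add: "tr d (A + B) = tr d A + tr d B" by (simp add: tr_def sum.distrib)
lemma tr_diff: "tr d (A - B) = tr d A - tr d B" by (simp add: tr_def sum_subtractf)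
lemma tr_sc: "tr d (sc c A) = c * tr d A" by (simp add: tr_def sc_def sum_distrib_left)
lemma tr_zero[simp]: "tr d 0 = 0" by (simp add: tr_def)
lemma tr_sum: "tr d (\<Sum>i\<in>I. f i) = (\<Sum>i\<in>I. tr d (f i))"
  unfolding tr_def fun_sum_apply2 by (rule sum.swap)
lemma tr_idm: "tr d (idm d) = of_nat d" by (simp add: tr_def idm_def)

lemma tr_mm_comm: "tr d (mm d A B) = tr d (mm d B A)"
proof -
  have "tr d (mm d A B) = (\<Sum>k<d. \<Sum>j<d. A k j * B j k)" by (simp add: tr_def mm_in)
  also have "\<dots> = (\<Sum>j<d. \<Sum>k<d. B j k * A k j)" by (subst sum.swap) (simp add: mult.commute)
  also have "\<dots> = tr d (mm d B A)" by (simp add: tr_def mm_in)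
  finally show ?thesis .
qed

lemma tr_prod_eq: "tr_prod d P Q = tr d (mm d P Q)"
  by (simp add: tr_prod_def tr_def mm_def)

lemma adj_adj[simp]: "adj (adj A) = A" by (simp add: fun_eq_iff adj_def)
lemma adj_add: "adj (A + B) = adj A + adj B" by (simp add: fun_eq_iff adj_def)
lemma adj_diff: "adj (A - B) = adj A - adj B" by (simp add: fun_eq_iff adj_def)
lemma adj_sc: "adj (sc c A) = sc (cnj c) (adj A)" by (simp add: fun_eq_iff adj_def sc_def)
lemma adj_idm[simp]: "adj (idm d) = idm d" by (simp add: fun_eq_iff adj_def idm_def)
lemma adj_zero[simp]: "adj 0 = 0" by (simp add: fun_eq_iff adj_def)
lemma adj_mm: "adj (mm d A B) = mm d (adj B) (adj A)"
  by (simp add: fun_eq_iff adj_def mm_def mult.commute)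
lemma adj_sum: "adj (\<Sum>i\<in>I. f i) = (\<Sum>i\<in>I. adj (f i))"
  by (simp add: fun_eq_iff adj_def fun_sum_apply2)

lemma tr_mm_adj: "tr d (mm d A (adj A)) = of_real (\<Sum>k<d. \<Sum>l<d. (cmod (A k l))\<^sup>2)"
proof -
  have "tr d (mm d A (adj A)) = (\<Sum>k<d. \<Sum>l<d. A k l * cnj (A k l))"
    by (simp add: tr_def mm_def adj_def)
  also have "\<dots> = (\<Sum>k<d. \<Sum>l<d. of_real ((cmod (A k l))\<^sup>2))"
    by (simp only: complex_norm_square)
  finally show ?thesis by (simp only: of_real_sum)
qed

lemma hs_zero: assumes "tc d A" "tr d (mm d A (adj A)) = 0" shows "A = 0"
proof (rule tc_eqI[OF assms(1) tc_zero])
  fix k l assume kl: "k < d" "l < d"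
  have "(\<Sum>k<d. \<Sum>l<d. (cmod (A k l))\<^sup>2) = 0" using assms(2) unfolding tr_mm_adj of_real_eq_0_iff .
  then have "\<forall>k\<in>{..<d}. (\<Sum>l<d. (cmod (A k l))\<^sup>2) = 0"
    by (subst (asm) sum_nonneg_eq_0_iff) (auto intro: sum_nonneg)
  then have "(\<Sum>l<d. (cmod (A k l))\<^sup>2) = 0" using kl by auto
  then have "\<forall>l\<in>{..<d}. (cmod (A k l))\<^sup>2 = 0"
    by (subst (asm) sum_nonneg_eq_0_iff) auto
  then show "A k l = 0 k l" using kl by auto
qed

lemma hs_pos: assumes "tc d A" "A \<noteq> 0"
  shows "Re (tr d (mm d A (adj A))) > 0" "Im (tr d (mm d A (adj A))) = 0"
proof -
  have ge: "(\<Sum>k<d. \<Sum>l<d. (cmod (A k l))\<^sup>2) \<ge> 0" by (intro sum_nonneg) auto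
  have "tr d (mm d A (adj A)) \<noteq> 0" using hs_zero assms by blast
  then have "(\<Sum>k<d. \<Sum>l<d. (cmod (A k l))\<^sup>2) \<noteq> 0" unfolding tr_mm_adj of_real_eq_0_iff .
  then show "Re (tr d (mm d A (adj A))) > 0" using ge unfolding tr_mm_adj Re_complex_of_real by linarith
  show "Im (tr d (mm d A (adj A))) = 0" unfolding tr_mm_adj Im_complex_of_real ..
qed

definition herm :: "cm \<Rightarrow> bool" where "herm A \<longleftrightarrow> adj A = A"

lemma herm_add[simp]: "herm A \<Longrightarrow> herm B \<Longrightarrow> herm (A + B)" by (simp add: herm_def adj_add)
lemma herm_diff[simp]: "herm A \<Longrightarrow> herm B \<Longrightarrow> herm (A - B)" by (simp add: herm_def adj_diff)
lemma herm_sc_real[simp]: "herm A \<Longrightarrow> herm (sc (of_real r) A)" by (simp add: herm_def adj_sc)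
lemma herm_idm[simp]: "herm (idm d)" by (simp add: herm_def)
lemma herm_zero[simp]: "herm 0" by (simp add: herm_def)
lemma herm_sum[simp]: "(\<And>i. i \<in> I \<Longrightarrow> herm (f i)) \<Longrightarrow> herm (\<Sum>i\<in>I. f i)"
  by (simp add: herm_def adj_sum)

lemma herm_zero_tr: "tc d A \<Longrightarrow> herm A \<Longrightarrow> tr d (mm d A A) = 0 \<Longrightarrow> A = 0"
  using hs_zero by (metis herm_def)


definition bf :: "nat \<Rightarrow> cm \<Rightarrow> (nat \<Rightarrow> complex) \<Rightarrow> (nat \<Rightarrow> complex) \<Rightarrow> complex" where
  "bf d P v w = (\<Sum>k<d. \<Sum>l<d. cnj (v k) * P k l * w l)"

definition ev :: "nat \<Rightarrow> nat \<Rightarrow> complex" where "ev p = (\<lambda>k. if k = p then 1 else 0)"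

lemma herm_psd_bf: "herm_psd d P \<longleftrightarrow> (\<forall>k<d. \<forall>l<d. P k l = cnj (P l k)) \<and>
     (\<forall>v. Im (bf d P v v) = 0 \<and> 0 \<le> Re (bf d P v v))"
  by (simp add: herm_psd_def bf_def Let_def)

lemma bf_add_left: "bf d P (\<lambda>k. x k + y k) w = bf d P x w + bf d P y w"
  by (simp add: bf_def distrib_left distrib_right sum.distrib)
lemma bf_add_right: "bf d P w (\<lambda>k. x k + y k) = bf d P w x + bf d P w y"
  by (simp add: bf_def distrib_left distrib_right sum.distrib)
lemma bf_sc_left: "bf d P (\<lambda>k. c * x k) w = cnj c * bf d P x w"
  by (simp add: bf_def sum_distrib_left mult.assoc)
lemma bf_sc_right: "bf d P w (\<lambda>k. c * x k) = c * bf d P w x"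
  by (simp add: bf_def sum_distrib_left mult.assoc mult.left_commute)

lemma bf_herm: assumes "\<forall>k<d. \<forall>l<d. P k l = cnj (P l k)" shows "bf d P w v = cnj (bf d P v w)"
proof -
  have "bf d P w v = (\<Sum>k<d. \<Sum>l<d. cnj (w k) * P k l * v l)" by (simp add: bf_def)
  also have "\<dots> = (\<Sum>l<d. \<Sum>k<d. cnj (w k) * P k l * v l)" by (rule sum.swap)
  also have "\<dots> = (\<Sum>l<d. \<Sum>k<d. cnj (cnj (v l) * P l k * w k))"
  proof (intro sum.cong refl)
    fix l k assume "l \<in> {..<d}" "k \<in> {..<d}"
    then have "P k l = cnj (P l k)" using assms unfolding lessThan_iff by blast
    then show "cnj (w k) * P k l * v l = cnj (cnj (v l) * P l k * w k)"
      by (simp add: mult.commute mult.left_commute)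
  qed
  also have "\<dots> = cnj (bf d P v w)" by (simp add: bf_def)
  finally show ?thesis .
qed

lemma bf_ev_left: assumes "p < d" shows "bf d P (ev p) w = (\<Sum>l<d. P p l * w l)"
proof -
  have "bf d P (ev p) w = (\<Sum>k<d. cnj (ev p k) * (\<Sum>l<d. P k l * w l))"
    by (simp add: bf_def sum_distrib_left mult.assoc)
  also have "\<dots> = (\<Sum>k<d. if k = p then (\<Sum>l<d. P k l * w l) else 0)"
    by (intro sum.cong refl) (simp add: ev_def)
  also have "\<dots> = (\<Sum>l<d. P p l * w l)" using assms by simp
  finally show ?thesis .
qed
lemma bf_ev_right: "p < d \<Longrightarrow> bf d P w (ev p) = (\<Sum>k<d. cnj (w k) * P k p)"
  by (simp add: bf_def ev_def if_distrib[of "\<lambda>x. _ * x"] cong: if_cong)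

lemma bf_expand: "bf d P (\<lambda>k. v k + c * w k) (\<lambda>k. v k + c * w k) =
   bf d P v v + c * bf d P v w + cnj c * bf d P w v + cnj c * c * bf d P w w"
  by (simp add: bf_add_left bf_add_right bf_sc_left bf_sc_right algebra_simps)

lemma psd_diag: assumes "herm_psd d P" "p < d" shows "Im (P p p) = 0" "0 \<le> Re (P p p)"
proof -
  have "bf d P (ev p) (ev p) = P p p" using assms(2) by (simp add: bf_ev_left) (simp add: ev_def if_distrib[of "\<lambda>x. _ * x"] cong: if_cong)
  then show "Im (P p p) = 0" "0 \<le> Re (P p p)" using assms(1) unfolding herm_psd_bf by metis+
qed

lemma quad_nonneg_lin_zero:
  fixes a q :: real
  assumes "\<And>t. 0 \<le> 2 * t * a + t * t * q" "0 \<le> q"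
  shows "a = 0"
proof (rule ccontr)
  assume "a \<noteq> 0"
  define t where "t = - a / (q + 1)"
  have q1: "q + 1 > 0" using assms(2) by linarith
  have ht: "(q+1)*t = -a" using q1 by (simp add: t_def)
  have "(q+1)*(q+1)*(2*t*a + t*t*q) = 2*(q+1)*((q+1)*t)*a + ((q+1)*t)*((q+1)*t)*q" by algebra
  also have "\<dots> = - (a*a*(q+2))" unfolding ht by algebra
  finally have e: "(q+1)*(q+1)*(2*t*a + t*t*q) = - (a*a*(q+2))" .
  have "a * a > 0" using \<open>a \<noteq> 0\<close> by (simp add: zero_less_mult_iff) linarith
  moreover have "q + 2 > 0" using assms(2) by linarith
  ultimately have "a * a * (q + 2) > 0" by simp
  moreover have "(q+1)*(q+1)*(2*t*a + t*t*q) \<ge> 0" using assms(1)[of t] q1 by simp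
  ultimately show False using e by linarith
qed

lemma psd_zero_form:
  assumes P: "herm_psd d P" and z: "bf d P v v = 0"
  shows "bf d P w v = 0"
proof -
  have H: "\<forall>k<d. \<forall>l<d. P k l = cnj (P l k)" using P unfolding herm_psd_bf by blast
  have pos: "\<And>u. Im (bf d P u u) = 0 \<and> 0 \<le> Re (bf d P u u)" using P unfolding herm_psd_bf by blast
  have gen: "Re (bf d P u v) = 0" for u
  proof (rule quad_nonneg_lin_zero)
    show "0 \<le> Re (bf d P u u)" using pos by blast
    fix t :: real
    have "bf d P (\<lambda>k. v k + of_real t * u k) (\<lambda>k. v k + of_real t * u k)
        = of_real t * bf d P v u + of_real t * bf d P u v + of_real t * of_real t * bf d P u u"
      using z by (simp add: bf_expand)
    also have "bf d P v u = cnj (bf d P u v)" using bf_herm[OF H] by blast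
    finally have e: "bf d P (\<lambda>k. v k + of_real t * u k) (\<lambda>k. v k + of_real t * u k)
        = of_real t * cnj (bf d P u v) + of_real t * bf d P u v + of_real t * of_real t * bf d P u u" .
    have "0 \<le> Re (bf d P (\<lambda>k. v k + of_real t * u k) (\<lambda>k. v k + of_real t * u k))" using pos by blast
    also have "Re (bf d P (\<lambda>k. v k + of_real t * u k) (\<lambda>k. v k + of_real t * u k)) = 2 * t * Re (bf d P u v) + t * t * Re (bf d P u u)"
      unfolding e by simp
    finally show "0 \<le> 2 * t * Re (bf d P u v) + t * t * Re (bf d P u u)" .
  qed
  have "Re (bf d P (\<lambda>k. \<i> * w k) v) = 0" by (rule gen)
  then have "Im (bf d P w v) = 0" by (simp add: bf_sc_left)
  moreover have "Re (bf d P w v) = 0" by (rule gen)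
  ultimately show ?thesis by (simp add: complex_eq_iff)
qed

lemma psd_zero_vec:
  assumes P: "herm_psd d P" and z: "bf d P v v = 0" and k: "k < d"
  shows "(\<Sum>l<d. P k l * v l) = 0"
  using psd_zero_form[OF P z, of "ev k"] k by (simp add: bf_ev_left)



lemma herm_entries: "herm_psd d B \<Longrightarrow> k < d \<Longrightarrow> l < d \<Longrightarrow> B k l = cnj (B l k)"
  unfolding herm_psd_def by blast

lemma bf_pos: "herm_psd d B \<Longrightarrow> Im (bf d B v v) = 0 \<and> 0 \<le> Re (bf d B v v)"
  unfolding herm_psd_bf by blast

lemma bf_diff_mat: "bf d (\<lambda>k l. B k l - E k l) v w = bf d B v w - bf d E v w"
  by (simp add: bf_def algebra_simps sum_subtractf)

lemma bf_outer: "bf d (\<lambda>k l. x k * cnj (x l)) v v =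
   cnj (\<Sum>l<d. cnj (x l) * v l) * (\<Sum>l<d. cnj (x l) * v l)"
proof -
  have "bf d (\<lambda>k l. x k * cnj (x l)) v v = (\<Sum>k<d. \<Sum>l<d. (cnj (v k) * x k) * (cnj (x l) * v l))"
    by (simp add: bf_def mult.assoc)
  also have "\<dots> = (\<Sum>k<d. cnj (v k) * x k) * (\<Sum>l<d. cnj (x l) * v l)"
    by (simp add: sum_product)
  also have "(\<Sum>k<d. cnj (v k) * x k) = cnj (\<Sum>l<d. cnj (x l) * v l)"
    by (simp add: mult.commute)
  finally show ?thesis .
qed

lemma chol_aux:
  "\<forall>p B. d - p = n \<longrightarrow> p \<le> d \<longrightarrow> herm_psd d B \<longrightarrow>
     (\<forall>k<d. \<forall>l<d. (k < p \<or> l < p) \<longrightarrow> B k l = 0) \<longrightarrow>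
     (\<exists>b. \<forall>k<d. \<forall>l<d. B k l = (\<Sum>j\<in>{p..<d}. b j k * cnj (b j l)))"
proof (induction n)
  case 0
  show ?case
  proof (intro allI impI)
    fix p B assume "d - p = 0" "p \<le> d" "herm_psd d B" and z: "\<forall>k<d. \<forall>l<d. (k < p \<or> l < p) \<longrightarrow> B k l = 0"
    then have "p = d" by simp
    then show "\<exists>b. \<forall>k<d. \<forall>l<d. B k l = (\<Sum>j\<in>{p..<d}. b j k * cnj (b j l))"
      using z by auto
  qed
next
  case (Suc n)
  show ?case
  proof (intro allI impI)
    fix p B assume dp: "d - p = Suc n" and "p \<le> d" and P: "herm_psd d B"
      and z: "\<forall>k<d. \<forall>l<d. (k < p \<or> l < p) \<longrightarrow> B k l = 0"
    have pd: "p < d" using dp by simp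
    have dp1: "d - Suc p = n" using dp by simp
    have ivl: "{p..<d} = insert p {Suc p..<d}" using pd by auto
    have IH: "\<And>B'. herm_psd d B' \<Longrightarrow> (\<forall>k<d. \<forall>l<d. (k < Suc p \<or> l < Suc p) \<longrightarrow> B' k l = 0) \<Longrightarrow>
        \<exists>b. \<forall>k<d. \<forall>l<d. B' k l = (\<Sum>j\<in>{Suc p..<d}. b j k * cnj (b j l))"
      using Suc.IH dp1 pd by auto
    have Im0: "Im (B p p) = 0" and Re0: "0 \<le> Re (B p p)" using psd_diag[OF P pd] by auto
    show "\<exists>b. \<forall>k<d. \<forall>l<d. B k l = (\<Sum>j\<in>{p..<d}. b j k * cnj (b j l))"
    proof (cases "Re (B p p) = 0")
      case True
      then have Bpp: "B p p = 0" using Im0 by (simp add: complex_eq_iff)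
      have "bf d B (ev p) (ev p) = 0" using pd Bpp
        by (simp add: bf_ev_left) (simp add: ev_def if_distrib[of "\<lambda>x. _ * x"] cong: if_cong)
      then have col: "B k p = 0" if "k < d" for k
        using psd_zero_vec[OF P _ that, of "ev p"] pd
        by (simp add: ev_def if_distrib[of "\<lambda>x. _ * x"] cong: if_cong)
      have row: "B p l = 0" if "l < d" for l
        using herm_entries[OF P pd that] col[OF that] by simp
      have "\<forall>k<d. \<forall>l<d. (k < Suc p \<or> l < Suc p) \<longrightarrow> B k l = 0"
      proof (intro allI impI)
        fix k l assume "k < d" "l < d" "k < Suc p \<or> l < Suc p"
        then show "B k l = 0" using z col row by (cases "k = p"; cases "l = p") auto
      qed
      then obtain b where b: "\<forall>k<d. \<forall>l<d. B k l = (\<Sum>j\<in>{Suc p..<d}. b j k * cnj (b j l))"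
        using IH[OF P] by blast
      define b' where "b' = b(p := (\<lambda>_. 0))"
      have "\<forall>k<d. \<forall>l<d. B k l = (\<Sum>j\<in>{p..<d}. b' j k * cnj (b' j l))"
      proof (intro allI impI)
        fix k l assume kl: "k < d" "l < d"
        have "(\<Sum>j\<in>{p..<d}. b' j k * cnj (b' j l)) = (\<Sum>j\<in>{Suc p..<d}. b' j k * cnj (b' j l))"
          unfolding ivl by (simp add: b'_def)
        also have "\<dots> = (\<Sum>j\<in>{Suc p..<d}. b j k * cnj (b j l))"
          by (intro sum.cong refl) (simp add: b'_def)
        finally show "B k l = (\<Sum>j\<in>{p..<d}. b' j k * cnj (b' j l))" using b kl by simp
      qed
      then show ?thesis by blast
    next
      case False
      then have rpos: "Re (B p p) > 0" using Re0 by simp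
      define sr where "sr = sqrt (Re (B p p))"
      have srpos: "sr > 0" using rpos by (simp add: sr_def)
      have Bpp: "B p p = of_real (sr * sr)" using Im0 rpos by (simp add: sr_def complex_eq_iff)
      define bp where "bp = (\<lambda>k. B k p / of_real sr)"
      define B' where "B' = (\<lambda>k l. B k l - bp k * cnj (bp l))"
      have Bkp: "B k p = of_real sr * bp k" for k using srpos by (simp add: bp_def)
      have Bpl: "B p l = of_real sr * cnj (bp l)" if "l < d" for l
        using herm_entries[OF P pd that] srpos by (simp add: bp_def)
      have herm': "\<forall>k<d. \<forall>l<d. B' k l = cnj (B' l k)"
      proof (intro allI impI)
        fix k l assume "k < d" "l < d"
        then have "B k l = cnj (B l k)" by (rule herm_entries[OF P])
        then show "B' k l = cnj (B' l k)" by (simp add: B'_def mult.commute)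
      qed
      have psd': "Im (bf d B' v v) = 0 \<and> 0 \<le> Re (bf d B' v v)" for v
      proof -
        define a where "a = (\<Sum>l<d. cnj (bp l) * v l)"
        have e1: "bf d B' v v = bf d B v v - cnj a * a"
          unfolding B'_def bf_diff_mat bf_outer a_def ..
        define c where "c = - a / of_real sr"
        define w where "w = (\<lambda>k. v k + c * ev p k)"
        have bvp: "bf d B v (ev p) = of_real sr * cnj a"
        proof -
          have "bf d B v (ev p) = (\<Sum>k<d. cnj (v k) * B k p)" using pd by (rule bf_ev_right)
          also have "\<dots> = of_real sr * (\<Sum>k<d. cnj (v k) * bp k)"
            by (simp add: Bkp sum_distrib_left mult.commute mult.left_commute)
          also have "(\<Sum>k<d. cnj (v k) * bp k) = cnj a" by (simp add: a_def mult.commute)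
          finally show ?thesis .
        qed
        have bpv: "bf d B (ev p) v = of_real sr * a"
        proof -
          have "bf d B (ev p) v = (\<Sum>l<d. B p l * v l)" using pd by (rule bf_ev_left)
          also have "\<dots> = (\<Sum>l<d. of_real sr * (cnj (bp l) * v l))"
            by (intro sum.cong refl) (simp add: Bpl)
          also have "\<dots> = of_real sr * a" by (simp add: a_def sum_distrib_left)
          finally show ?thesis .
        qed
        have bpp: "bf d B (ev p) (ev p) = of_real (sr * sr)"
          using pd Bpp by (simp add: bf_ev_left) (simp add: ev_def if_distrib[of "\<lambda>x. _ * x"] cong: if_cong)
        have "bf d B w w = bf d B v v + c * (of_real sr * cnj a) + cnj c * (of_real sr * a)
             + cnj c * c * of_real (sr * sr)"
          unfolding w_def bf_expand bvp bpv bpp ..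
        also have "\<dots> = bf d B v v - cnj a * a"
          using srpos by (simp add: c_def field_simps)
        finally have "bf d B' v v = bf d B w w" using e1 by simp
        then show ?thesis using bf_pos[OF P] by simp
      qed
      have P': "herm_psd d B'" unfolding herm_psd_bf using herm' psd' by blast
      have bpk: "bp k = 0" if "k < p" "k < d" for k
        using z that pd by (simp add: bp_def)
      have z': "\<forall>k<d. \<forall>l<d. (k < Suc p \<or> l < Suc p) \<longrightarrow> B' k l = 0"
      proof (intro allI impI)
        fix k l assume kl: "k < d" "l < d" "k < Suc p \<or> l < Suc p"
        have rowp: "B' p l = 0" if "l < d" for l
          using srpos that by (simp add: B'_def Bpl bp_def Bpp)
        have colp: "B' k p = 0" if "k < d" for k
        proof -
          have "B' k p = cnj (B' p k)" using herm' that pd by blast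
          then show ?thesis using rowp[OF that] by simp
        qed
        show "B' k l = 0"
        proof (cases "k < p \<or> l < p")
          case True
          then show ?thesis using z kl bpk by (auto simp: B'_def)
        next
          case False
          then have "k = p \<or> l = p" using kl by auto
          then show ?thesis using rowp colp kl by auto
        qed
      qed
      obtain b where b: "\<forall>k<d. \<forall>l<d. B' k l = (\<Sum>j\<in>{Suc p..<d}. b j k * cnj (b j l))"
        using IH[OF P' z'] by blast
      define b' where "b' = b(p := bp)"
      have "\<forall>k<d. \<forall>l<d. B k l = (\<Sum>j\<in>{p..<d}. b' j k * cnj (b' j l))"
      proof (intro allI impI)
        fix k l assume kl: "k < d" "l < d"
        have "(\<Sum>j\<in>{p..<d}. b' j k * cnj (b' j l)) = bp k * cnj (bp l) + (\<Sum>j\<in>{Suc p..<d}. b' j k * cnj (b' j l))"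
          unfolding ivl by (simp add: b'_def)
        also have "(\<Sum>j\<in>{Suc p..<d}. b' j k * cnj (b' j l)) = (\<Sum>j\<in>{Suc p..<d}. b j k * cnj (b j l))"
          by (intro sum.cong refl) (simp add: b'_def)
        also have "\<dots> = B' k l" using b kl by simp
        finally show "B k l = (\<Sum>j\<in>{p..<d}. b' j k * cnj (b' j l))" by (simp add: B'_def)
      qed
      then show ?thesis by blast
    qed
  qed
qed

lemma cholesky:
  assumes "herm_psd d B"
  shows "\<exists>b. \<forall>k<d. \<forall>l<d. B k l = (\<Sum>j<d. b j k * cnj (b j l))"
proof -
  have "\<exists>b. \<forall>k<d. \<forall>l<d. B k l = (\<Sum>j\<in>{0..<d}. b j k * cnj (b j l))"
    using chol_aux[of d "d - 0"] assms by blast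
  then show ?thesis by (simp add: atLeast0LessThan)
qed



lemma psd_orth:
  assumes A: "herm_psd d A" and B: "herm_psd d B" and t: "tr d (mm d A B) = 0"
  shows "mm d A B = 0"
proof -
  obtain b where b: "\<forall>k<d. \<forall>l<d. B k l = (\<Sum>j<d. b j k * cnj (b j l))"
    using cholesky[OF B] by blast
  have "tr d (mm d A B) = (\<Sum>k<d. \<Sum>l<d. A k l * B l k)" by (simp add: tr_def mm_in)
  also have "\<dots> = (\<Sum>k<d. \<Sum>l<d. \<Sum>j<d. cnj (b j k) * A k l * b j l)"
    using b by (simp add: sum_distrib_left mult.commute mult.left_commute)
  also have "\<dots> = (\<Sum>k<d. \<Sum>j<d. \<Sum>l<d. cnj (b j k) * A k l * b j l)"
    by (rule sum.cong[OF refl], rule sum.swap)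
  also have "\<dots> = (\<Sum>j<d. \<Sum>k<d. \<Sum>l<d. cnj (b j k) * A k l * b j l)"
    by (rule sum.swap)
  also have "\<dots> = (\<Sum>j<d. bf d A (b j) (b j))" by (simp add: bf_def)
  finally have s0: "(\<Sum>j<d. bf d A (b j) (b j)) = 0" using t by simp
  have re: "(\<Sum>j<d. Re (bf d A (b j) (b j))) = 0" using arg_cong[OF s0, of Re] by (simp add: Re_sum)
  have "\<forall>j\<in>{..<d}. Re (bf d A (b j) (b j)) = 0"
    using re by (subst (asm) sum_nonneg_eq_0_iff) (auto simp: bf_pos[OF A])
  then have z: "bf d A (b j) (b j) = 0" if "j < d" for j
    using that bf_pos[OF A, of "b j"] by (simp add: complex_eq_iff)
  have zv: "(\<Sum>l<d. A k l * b j l) = 0" if "j < d" "k < d" for j k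
    using psd_zero_vec[OF A z[OF that(1)] that(2)] .
  show ?thesis
  proof (rule tc_eqI[OF tc_mm tc_zero])
    fix k m assume km: "k < d" "m < d"
    have "mm d A B k m = (\<Sum>l<d. A k l * (\<Sum>j<d. b j l * cnj (b j m)))"
      using km b by (simp add: mm_in)
    also have "\<dots> = (\<Sum>l<d. \<Sum>j<d. A k l * b j l * cnj (b j m))"
      by (simp add: sum_distrib_left mult.assoc)
    also have "\<dots> = (\<Sum>j<d. \<Sum>l<d. A k l * b j l * cnj (b j m))" by (rule sum.swap)
    also have "\<dots> = (\<Sum>j<d. (\<Sum>l<d. A k l * b j l) * cnj (b j m))"
      by (simp add: sum_distrib_right)
    also have "\<dots> = 0" using zv km by simp
    finally show "mm d A B k m = 0 k m" by simp
  qed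
qed

lemma psd_gram: "herm_psd d (mm d (adj N) N)"
  unfolding herm_psd_bf
proof (intro conjI allI impI)
  fix k l assume "k < d" "l < d"
  then show "mm d (adj N) N k l = cnj (mm d (adj N) N l k)"
    by (simp add: mm_in adj_def mult.commute)
next
  fix v
  have "bf d (mm d (adj N) N) v v = (\<Sum>k<d. \<Sum>l<d. cnj (v k) * (\<Sum>j<d. cnj (N j k) * N j l) * v l)"
    by (simp add: bf_def mm_in adj_def)
  also have "\<dots> = (\<Sum>k<d. \<Sum>l<d. \<Sum>j<d. cnj (N j k * v k) * (N j l * v l))"
    by (simp add: sum_distrib_left sum_distrib_right mult.commute mult.left_commute)
  also have "\<dots> = (\<Sum>k<d. \<Sum>j<d. \<Sum>l<d. cnj (N j k * v k) * (N j l * v l))"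
    by (rule sum.cong[OF refl], rule sum.swap)
  also have "\<dots> = (\<Sum>j<d. \<Sum>k<d. \<Sum>l<d. cnj (N j k * v k) * (N j l * v l))"
    by (rule sum.swap)
  also have "\<dots> = (\<Sum>j<d. cnj (\<Sum>k<d. N j k * v k) * (\<Sum>l<d. N j l * v l))"
    by (simp add: sum_product)
  also have "\<dots> = (\<Sum>j<d. of_real ((cmod (\<Sum>l<d. N j l * v l))\<^sup>2))"
  proof -
    have cz: "cnj z * z = of_real ((cmod z)\<^sup>2)" for z :: complex
      by (simp only: complex_norm_square mult.commute)
    show ?thesis by (simp only: cz)
  qed
  finally have e: "bf d (mm d (adj N) N) v v = of_real (\<Sum>j<d. (cmod (\<Sum>l<d. N j l * v l))\<^sup>2)"
    by simp
  show "Im (bf d (mm d (adj N) N) v v) = 0" unfolding e by simp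
  show "0 \<le> Re (bf d (mm d (adj N) N) v v)" unfolding e by (simp add: sum_nonneg)
qed

lemma psd_scale: assumes "herm_psd d P" "0 \<le> r" shows "herm_psd d (sc (of_real r) P)"
  unfolding herm_psd_bf
proof (intro conjI allI impI)
  fix k l assume "k < d" "l < d"
  then show "sc (of_real r) P k l = cnj (sc (of_real r) P l k)"
    using herm_entries[OF assms(1), of k l] by (simp add: sc_def)
next
  fix v
  have e: "bf d (sc (of_real r) P) v v = of_real r * bf d P v v"
    by (simp add: bf_def sc_def sum_distrib_left mult.commute mult.left_commute)
  show "Im (bf d (sc (of_real r) P) v v) = 0" unfolding e using bf_pos[OF assms(1)] by simp
  show "0 \<le> Re (bf d (sc (of_real r) P) v v)" unfolding e using bf_pos[OF assms(1), of v] assms(2) by simp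
qed

lemma bf_trunc: "bf d (trunc d P) v w = bf d P v w"
  by (simp add: bf_def trunc_def)

lemma psd_trunc: "herm_psd d (trunc d P) \<longleftrightarrow> herm_psd d P"
  unfolding herm_psd_bf bf_trunc by (simp add: trunc_def)

lemma herm_trunc: "herm_psd d P \<Longrightarrow> herm (trunc d P)"
  unfolding herm_def
proof (intro ext)
  fix k l assume P: "herm_psd d P"
  show "adj (trunc d P) k l = trunc d P k l"
  proof (cases "k < d \<and> l < d")
    case True then show ?thesis using herm_entries[OF P, of k l] by (simp add: adj_def trunc_def)
  next
    case False then show ?thesis by (auto simp: adj_def trunc_def)
  qed
qed

lemma tr_prod_trunc: "tr_prod d (trunc d P) (trunc d Q) = tr_prod d P Q"
  by (simp add: tr_prod_def trunc_def)



lemma mm_lin_lin: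
  "mm d (\<Sum>i\<in>I. sc (a i) (G i)) (\<Sum>j\<in>I. sc (b j) (G j)) = (\<Sum>i\<in>I. \<Sum>j\<in>I. sc (a i * b j) (mm d (G i) (G j)))"
proof -
  have "mm d (\<Sum>i\<in>I. sc (a i) (G i)) (\<Sum>j\<in>I. sc (b j) (G j)) = (\<Sum>i\<in>I. mm d (sc (a i) (G i)) (\<Sum>j\<in>I. sc (b j) (G j)))"
    by (rule mm_sum_left)
  also have "\<dots> = (\<Sum>i\<in>I. \<Sum>j\<in>I. mm d (sc (a i) (G i)) (sc (b j) (G j)))"
    by (simp only: mm_sum_right)
  also have "\<dots> = (\<Sum>i\<in>I. \<Sum>j\<in>I. sc (a i * b j) (mm d (G i) (G j)))"
    by (simp only: mm_sc_left mm_sc_right sc_sc mult.commute)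
  finally show ?thesis .
qed

lemma sum_sc_mat: "(\<Sum>i\<in>I. sc (f i) R) = sc (\<Sum>i\<in>I. f i) R"
  by (rule sum_sc)

lemma anticomm_lin:
  assumes fin: "finite I"
    and G: "\<And>i j. i \<in> I \<Longrightarrow> j \<in> I \<Longrightarrow> mm d (G i) (G j) + mm d (G j) (G i) = sc (2 * M i j) R"
  shows "mm d (\<Sum>i\<in>I. sc (a i) (G i)) (\<Sum>j\<in>I. sc (b j) (G j)) + mm d (\<Sum>j\<in>I. sc (b j) (G j)) (\<Sum>i\<in>I. sc (a i) (G i))
     = sc (2 * (\<Sum>i\<in>I. \<Sum>j\<in>I. a i * b j * M i j)) R"
proof -
  have sw: "(\<Sum>i\<in>I. \<Sum>j\<in>I. sc (b i * a j) (mm d (G i) (G j))) = (\<Sum>i\<in>I. \<Sum>j\<in>I. sc (a i * b j) (mm d (G j) (G i)))"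
    by (subst sum.swap) (simp add: mult.commute)
  have "mm d (\<Sum>i\<in>I. sc (a i) (G i)) (\<Sum>j\<in>I. sc (b j) (G j)) + mm d (\<Sum>j\<in>I. sc (b j) (G j)) (\<Sum>i\<in>I. sc (a i) (G i))
      = (\<Sum>i\<in>I. \<Sum>j\<in>I. sc (a i * b j) (mm d (G i) (G j))) + (\<Sum>i\<in>I. \<Sum>j\<in>I. sc (a i * b j) (mm d (G j) (G i)))"
    unfolding mm_lin_lin sw ..
  also have "\<dots> = (\<Sum>i\<in>I. \<Sum>j\<in>I. sc (a i * b j) (mm d (G i) (G j) + mm d (G j) (G i)))"
    by (simp add: sum.distrib[symmetric] sc_add)
  also have "\<dots> = (\<Sum>i\<in>I. \<Sum>j\<in>I. sc (a i * b j * (2 * M i j)) R)"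
    by (intro sum.cong refl) (simp add: G sc_sc)
  also have "\<dots> = sc (2 * (\<Sum>i\<in>I. \<Sum>j\<in>I. a i * b j * M i j)) R"
    by (simp add: sum_sc sum_distrib_left mult.commute mult.left_commute)
  finally show ?thesis .
qed

section \<open>Clifford generators via bits\<close>

definition sg :: "nat \<Rightarrow> nat \<Rightarrow> complex" where
  "sg p k = (-1) ^ card {j. j < k \<and> bit p j}"

definition gam :: "nat \<Rightarrow> nat \<Rightarrow> cm" where
  "gam s k = (\<lambda>p q. if p < 2^s \<and> q < 2^s \<and> q = flip_bit k p then sg p k else 0)"

lemma flip_flip[simp]: "flip_bit k (flip_bit k p) = (p::nat)"
  by (rule bit_eqI) (auto simp: bit_flip_bit_iff)

lemma flip_neq: "flip_bit k p \<noteq> (p::nat)"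
proof
  assume h: "flip_bit k p = p"
  have "bit (flip_bit k p) k = (\<not> bit p k)" by (simp add: bit_flip_bit_iff)
  then show False using h by simp
qed

lemma flip_comm: "flip_bit i (flip_bit j p) = flip_bit j (flip_bit i (p::nat))"
  by (rule bit_eqI) (auto simp: bit_flip_bit_iff)

lemma flip_bound: assumes "k < s" "p < 2^s" shows "flip_bit k p < (2::nat)^s"
proof -
  have "take_bit s p = p" using assms(2) by (simp add: take_bit_nat_eq_self_iff)
  then have "take_bit s (flip_bit k p) = flip_bit k p"
    using assms(1) by (simp add: take_bit_flip_bit_eq)
  then show ?thesis by (simp add: take_bit_nat_eq_self_iff)
qed

lemma bit_flip_other: "j \<noteq> i \<Longrightarrow> bit (flip_bit i (p::nat)) j = bit p j"
  by (auto simp: bit_flip_bit_iff)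

lemma sg_sq: "sg p k * sg p k = 1"
  by (simp add: sg_def power_mult_distrib[symmetric])

lemma sg_flip_same: "sg (flip_bit k p) k = sg p k"
proof -
  have "{j. j < k \<and> bit (flip_bit k p) j} = {j. j < k \<and> bit p j}"
    by (auto simp: bit_flip_other)
  then show ?thesis by (simp add: sg_def)
qed

lemma sg_flip_above: assumes "j < i" shows "sg (flip_bit i p) j = sg p j"
proof -
  have "{l. l < j \<and> bit (flip_bit i p) l} = {l. l < j \<and> bit p l}"
    using assms by (auto simp: bit_flip_other)
  then show ?thesis by (simp add: sg_def)
qed

lemma sg_flip_below: assumes "i < j" shows "sg (flip_bit i p) j = - sg p j"
proof -
  let ?S = "{l. l < j \<and> bit p l}"
  let ?T = "{l. l < j \<and> bit (flip_bit i p) l}"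
  have fin: "finite ?S" "finite ?T" by auto
  show ?thesis
  proof (cases "bit p i")
    case True
    then have "?S = insert i ?T" "i \<notin> ?T" using assms by (auto simp: bit_flip_bit_iff)
    then have "card ?S = Suc (card ?T)" using fin by simp
    then show ?thesis by (simp add: sg_def)
  next
    case False
    then have "?T = insert i ?S" "i \<notin> ?S" using assms by (auto simp: bit_flip_bit_iff)
    then have "card ?T = Suc (card ?S)" using fin by simp
    then show ?thesis by (simp add: sg_def)
  qed
qed

lemma sg_real: "cnj (sg p k) = sg p k"
  by (simp add: sg_def)

lemma tc_gam[simp]: "tc (2^s) (gam s k)"
  unfolding tc_def gam_def by auto

lemma gam_mm:
  assumes "i < s" "j < s" "p < 2^s" "r < 2^s"
  shows "mm (2^s) (gam s i) (gam s j) p r = (if r = flip_bit j (flip_bit i p) then sg p i * sg (flip_bit i p) j else 0)"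
proof -
  have fi: "flip_bit i p < 2^s" using flip_bound assms by blast
  have "mm (2^s) (gam s i) (gam s j) p r = (\<Sum>q<2^s. gam s i p q * gam s j q r)"
    using assms by (simp add: mm_in)
  also have "\<dots> = (\<Sum>q<2^s. if q = flip_bit i p then sg p i * gam s j q r else 0)"
    by (intro sum.cong refl) (auto simp: gam_def assms)
  also have "\<dots> = sg p i * gam s j (flip_bit i p) r" using fi by simp
  also have "\<dots> = (if r = flip_bit j (flip_bit i p) then sg p i * sg (flip_bit i p) j else 0)"
    using fi assms by (simp add: gam_def)
  finally show ?thesis .
qed

lemma flip_eq_iff: "(p = flip_bit k q) = (q = flip_bit k (p::nat))"
  by (metis flip_flip)

lemma gam_anticomm:
  assumes "i < s" "j < s"
  shows "mm (2^s) (gam s i) (gam s j) + mm (2^s) (gam s j) (gam s i) = sc (2 * (if i = j then 1 else 0)) (idm (2^s))"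
proof (rule tc_eqI[of "2^s"])
  show "tc (2^s) (mm (2^s) (gam s i) (gam s j) + mm (2^s) (gam s j) (gam s i))" by simp
  show "tc (2^s) (sc (2 * (if i = j then 1 else 0)) (idm (2^s)))" by simp
  fix p r :: nat assume pr: "p < 2^s" "r < 2^s"
  show "(mm (2^s) (gam s i) (gam s j) + mm (2^s) (gam s j) (gam s i)) p r = sc (2 * (if i = j then 1 else 0)) (idm (2^s)) p r"
  proof (cases "i = j")
    case True
    have "mm (2^s) (gam s i) (gam s i) p r = (if r = p then 1 else 0)"
      using assms pr by (simp add: gam_mm sg_flip_same sg_sq)
    then show ?thesis using True pr by (simp add: sc_def idm_def)
  next
    case False
    have sgn: "sg p i * sg (flip_bit i p) j + sg p j * sg (flip_bit j p) i = 0"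
    proof (cases "i < j")
      case True then show ?thesis by (simp add: sg_flip_below sg_flip_above)
    next
      case False then have "j < i" using \<open>i \<noteq> j\<close> by simp
      then show ?thesis by (simp add: sg_flip_below sg_flip_above)
    qed
    have e1: "mm (2^s) (gam s i) (gam s j) p r = (if r = flip_bit j (flip_bit i p) then sg p i * sg (flip_bit i p) j else 0)"
      using assms pr by (rule gam_mm)
    have e2: "mm (2^s) (gam s j) (gam s i) p r = (if r = flip_bit j (flip_bit i p) then sg p j * sg (flip_bit j p) i else 0)"
      using gam_mm[of j s i p r] assms pr flip_comm[of i j p] by simp
    have "(mm (2^s) (gam s i) (gam s j) + mm (2^s) (gam s j) (gam s i)) p r = 0"
      unfolding plus_fun_apply e1 e2 using sgn by simp
    then show ?thesis using False by (simp add: sc_def)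
  qed
qed

lemma gam_herm: "herm (gam s k)"
  unfolding herm_def
proof (intro ext)
  fix p q
  show "adj (gam s k) p q = gam s k p q"
  proof (cases "p < 2^s \<and> q < 2^s \<and> q = flip_bit k p")
    case True
    then have "p = flip_bit k q" by simp
    then show ?thesis using True by (simp add: adj_def gam_def sg_real sg_flip_same)
  next
    case False
    then have "\<not> (q < 2^s \<and> p < 2^s \<and> p = flip_bit k q)" using flip_eq_iff by blast
    then have "gam s k q p = 0" unfolding gam_def by meson
    moreover have "gam s k p q = 0" using False unfolding gam_def by meson
    ultimately show ?thesis by (simp add: adj_def)
  qed
qed

lemma tr_gam: "tr (2^s) (gam s k) = 0"
  unfolding tr_def gam_def using flip_neq by (simp add: eq_commute[of _ "flip_bit _ _"])



lemma span_range_repr: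
  fixes u :: "'n::finite \<Rightarrow> 'b::real_vector"
  assumes "x \<in> span (range u)"
  shows "\<exists>c. x = (\<Sum>i\<in>UNIV. c i *\<^sub>R u i)"
  using assms
proof (induction rule: span_induct_alt)
  case base
  then show ?case by (intro exI[of _ "\<lambda>_. 0"]) simp
next
  case (step c x y)
  then obtain c' where c': "y = (\<Sum>i\<in>UNIV. c' i *\<^sub>R u i)" by blast
  from step obtain j where j: "x = u j" by blast
  show ?case
    by (intro exI[of _ "\<lambda>i. c' i + (if i = j then c else 0)"])
       (simp add: c' j scaleR_add_left sum.distrib if_distrib[of "\<lambda>t. t *\<^sub>R _"] cong: if_cong)
qed

lemma coords_from_vectors:
  fixes C :: "real^'n^'n" and u :: "'n \<Rightarrow> real^'m"
  assumes Cu: "\<And>i j. C $ i $ j = u i \<bullet> u j"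
  shows "\<exists>s \<alpha> c. (\<forall>i j. C $ i $ j = (\<Sum>k<s. \<alpha> i k * \<alpha> j k)) \<and>
     (\<forall>k<s. \<forall>l<s. (\<Sum>i\<in>UNIV. c k i * \<alpha> i l) = (if k = l then 1 else 0)) \<and> rank C \<le> s"
proof -
  let ?W = "span (range u)"
  obtain B where BW: "B \<subseteq> ?W" and orth: "pairwise orthogonal B"
    and n1: "\<And>x. x \<in> B \<Longrightarrow> norm x = 1" and ind: "independent B"
    and cB: "card B = dim ?W" and sB: "span B = ?W"
    using orthonormal_basis_subspace[OF subspace_span] by blast
  have finB: "finite B" using ind by (rule independent_imp_finite)
  define s where "s = card B"
  obtain e where e: "bij_betw e {0..<s} B" using ex_bij_betw_nat_finite[OF finB] unfolding s_def by blast
  have eB: "e k \<in> B" if "k < s" for k using e that by (auto simp: bij_betw_def)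
  have einj: "e k = e l \<Longrightarrow> k < s \<Longrightarrow> l < s \<Longrightarrow> k = l" for k l
    using e by (auto simp: bij_betw_def inj_on_def)
  have einner: "e k \<bullet> e l = (if k = l then 1 else 0)" if "k < s" "l < s" for k l
  proof (cases "k = l")
    case True
    then show ?thesis using n1[OF eB[OF that(1)]] by (simp add: norm_eq_1)
  next
    case False
    then have "e k \<noteq> e l" using einj that by blast
    then show ?thesis using orth eB that False by (auto simp: pairwise_def orthogonal_def)
  qed
  define \<alpha> where "\<alpha> i k = u i \<bullet> e k" for i k
  have sumB: "(\<Sum>b\<in>B. f b) = (\<Sum>k<s. f (e k))" for f :: "real^'m \<Rightarrow> real"
    using sum.reindex_bij_betw[OF e, of f] by (simp add: atLeast0LessThan)
  have expand: "u i = (\<Sum>b\<in>B. (u i \<bullet> b) *\<^sub>R b)" for i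
    using orthonormal_basis_expand[OF orth n1 _ finB, of "u i"] sB by (simp add: span_base)
  have g1: "C $ i $ j = (\<Sum>k<s. \<alpha> i k * \<alpha> j k)" for i j
  proof -
    have "C $ i $ j = (\<Sum>b\<in>B. (u i \<bullet> b) *\<^sub>R b) \<bullet> u j" using Cu expand by metis
    also have "\<dots> = (\<Sum>b\<in>B. (u i \<bullet> b) * (b \<bullet> u j))" by (simp only: inner_sum_left inner_scaleR_left)
    also have "\<dots> = (\<Sum>b\<in>B. (u i \<bullet> b) * (u j \<bullet> b))" by (simp only: inner_commute[of _ "u j"])
    also have "\<dots> = (\<Sum>k<s. \<alpha> i k * \<alpha> j k)" by (simp add: sumB \<alpha>_def)
    finally show ?thesis .
  qed
  have "\<exists>c. e k = (\<Sum>i\<in>UNIV. c i *\<^sub>R u i)" if "k < s" for k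
    using span_range_repr[of "e k" u] eB[OF that] BW by blast
  then obtain c where c: "\<And>k. k < s \<Longrightarrow> e k = (\<Sum>i\<in>UNIV. c k i *\<^sub>R u i)" by metis
  have g2: "(\<Sum>i\<in>UNIV. c k i * \<alpha> i l) = (if k = l then 1 else 0)" if "k < s" "l < s" for k l
  proof -
    have "(\<Sum>i\<in>UNIV. c k i * \<alpha> i l) = (\<Sum>i\<in>UNIV. c k i *\<^sub>R u i) \<bullet> e l"
      by (simp add: \<alpha>_def inner_sum_left)
    also have "\<dots> = e k \<bullet> e l" using c[OF that(1)] by simp
    finally show ?thesis using einner[OF that] by simp
  qed
  define U :: "real^'n^'m" where "U = (\<chi> q i. u i $ q)"
  have CU: "C = transpose U ** U"
    by (simp add: vec_eq_iff matrix_matrix_mult_def transpose_def U_def Cu inner_vec_def)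
  have colU: "columns U = range u"
    by (auto simp: columns_def column_def U_def vec_eq_iff)
  have "rank C \<le> rank U" unfolding CU by (rule rank_mul_le_right)
  also have "rank U = dim (range u)" by (simp add: column_rank_def colU)
  also have "\<dots> = s" by (simp add: s_def cB dim_span)
  finally have g3: "rank C \<le> s" .
  show ?thesis using g1 g2 g3 by blast
qed



lemma quad_vec: "x \<bullet> (C *v x) = (\<Sum>i\<in>UNIV. \<Sum>j\<in>UNIV. x $ i * C $ i $ j * x $ j)"
  for C :: "real^'n^'n"
  by (simp add: inner_vec_def matrix_vector_mult_def sum_distrib_left mult.assoc)

lemma gram_vectors:
  fixes C :: "real^'n^'n"
  assumes psd: "psd_real C"
  shows "\<exists>u :: 'n \<Rightarrow> real^('n \<times> bool). \<forall>i j. C $ i $ j = u i \<bullet> u j"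
proof -
  define N where "N = CARD('n)"
  obtain h where h: "bij_betw h (UNIV::'n set) {0..<N}"
    using ex_bij_betw_finite_nat[of "UNIV::'n set"] unfolding N_def by auto
  define g where "g = inv_into UNIV h"
  have gh: "g (h i) = i" for i using h by (simp add: g_def bij_betw_def)
  have hlt: "h i < N" for i using h by (auto simp: bij_betw_def)
  have reidx: "(\<Sum>k<N. f k) = (\<Sum>i\<in>UNIV. f (h i))" for f :: "nat \<Rightarrow> 'a::comm_monoid_add"
    using sum.reindex_bij_betw[OF h, of f] by (simp add: atLeast0LessThan)
  have sym: "C $ i $ j = C $ j $ i" for i j
    using psd unfolding psd_real_def by (metis transpose_def vec_lambda_beta)
  have pos: "0 \<le> x \<bullet> (C *v x)" for x using psd unfolding psd_real_def by blast
  define B' where "B' = (\<lambda>k l. if k < N \<and> l < N then complex_of_real (C $ g k $ g l) else 0)"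
  have B'h: "B' (h i) (h j) = complex_of_real (C $ i $ j)" for i j by (simp add: B'_def hlt gh)
  have P: "herm_psd N B'"
    unfolding herm_psd_bf
  proof (intro conjI allI impI)
    fix k l assume "k < N" "l < N"
    then show "B' k l = cnj (B' l k)" using sym by (simp add: B'_def)
  next
    fix v
    define X where "X = (\<chi> i. Re (v (h i)))"
    define Y where "Y = (\<chi> i. Im (v (h i)))"
    have e: "bf N B' v v = (\<Sum>i\<in>UNIV. \<Sum>j\<in>UNIV. cnj (v (h i)) * complex_of_real (C $ i $ j) * v (h j))"
      by (simp add: bf_def reidx B'h)
    have "Re (bf N B' v v) = (\<Sum>i\<in>UNIV. \<Sum>j\<in>UNIV. X $ i * C $ i $ j * X $ j) + (\<Sum>i\<in>UNIV. \<Sum>j\<in>UNIV. Y $ i * C $ i $ j * Y $ j)"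
      unfolding e by (simp add: Re_sum X_def Y_def sum.distrib[symmetric] algebra_simps)
    also have "\<dots> = X \<bullet> (C *v X) + Y \<bullet> (C *v Y)" by (simp add: quad_vec)
    finally show "0 \<le> Re (bf N B' v v)" using pos[of X] pos[of Y] by simp
    have "Im (bf N B' v v) = (\<Sum>i\<in>UNIV. \<Sum>j\<in>UNIV. X $ i * C $ i $ j * Y $ j) - (\<Sum>i\<in>UNIV. \<Sum>j\<in>UNIV. Y $ i * C $ i $ j * X $ j)"
      unfolding e by (simp add: Im_sum X_def Y_def sum_subtractf[symmetric] algebra_simps)
    also have "(\<Sum>i\<in>UNIV. \<Sum>j\<in>UNIV. Y $ i * C $ i $ j * X $ j) = (\<Sum>j\<in>UNIV. \<Sum>i\<in>UNIV. Y $ i * C $ i $ j * X $ j)"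
      by (rule sum.swap)
    also have "\<dots> = (\<Sum>i\<in>UNIV. \<Sum>j\<in>UNIV. X $ i * C $ i $ j * Y $ j)"
      by (intro sum.cong refl) (simp add: sym[of _ "_"] mult.commute mult.left_commute)
    finally show "Im (bf N B' v v) = 0" by simp
  qed
  obtain b where b: "\<forall>k<N. \<forall>l<N. B' k l = (\<Sum>m<N. b m k * cnj (b m l))"
    using cholesky[OF P] by blast
  define u :: "'n \<Rightarrow> real^('n \<times> bool)" where
    "u i = (\<chi> q. if snd q then Re (b (h (fst q)) (h i)) else Im (b (h (fst q)) (h i)))" for i
  have "C $ i $ j = u i \<bullet> u j" for i j
  proof -
    have "u i \<bullet> u j = (\<Sum>q\<in>UNIV \<times> UNIV. u i $ q * u j $ q)"
      by (simp add: inner_vec_def UNIV_Times_UNIV)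
    also have "\<dots> = (\<Sum>p\<in>UNIV. \<Sum>t\<in>UNIV. u i $ (p, t) * u j $ (p, t))"
      by (simp add: sum.cartesian_product case_prod_beta)
    also have "\<dots> = (\<Sum>p\<in>UNIV. Re (b (h p) (h i) * cnj (b (h p) (h j))))"
      by (simp add: u_def UNIV_bool add.commute)
    also have "\<dots> = Re (\<Sum>m<N. b m (h i) * cnj (b m (h j)))"
      by (simp add: reidx Re_sum)
    also have "\<dots> = C $ i $ j" using b hlt B'h by simp
    finally show ?thesis by simp
  qed
  then show ?thesis by blast
qed

lemma gram_coords:
  fixes C :: "real^'n^'n"
  assumes "psd_real C"
  shows "\<exists>s \<alpha> c. (\<forall>i j. C $ i $ j = (\<Sum>k<s. \<alpha> i k * \<alpha> j k)) \<and>
     (\<forall>k<s. \<forall>l<s. (\<Sum>i\<in>UNIV. c k i * \<alpha> i l) = (if k = l then 1 else 0)) \<and> rank C \<le> s"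
proof -
  obtain u :: "'n \<Rightarrow> real^('n \<times> bool)" where "\<forall>i j. C $ i $ j = u i \<bullet> u j"
    using gram_vectors[OF assms] by blast
  then show ?thesis using coords_from_vectors[of C u] by blast
qed



lemma P_mat_entry: "P_mat C $ x $ y = blk (C $ snd x $ snd y) $ fst x $ fst y"
proof -
  have "P_mat C $ x $ y = (\<Sum>i\<in>UNIV. \<Sum>j\<in>UNIV. blk (C $ i $ j) $ fst x $ fst y * (if snd x = i \<and> snd y = j then 1 else 0))"
    by (simp add: P_mat_def kron_def unit_mat_def)
  also have "\<dots> = (\<Sum>i\<in>UNIV. if snd x = i then blk (C $ i $ snd y) $ fst x $ fst y else 0)"
  proof (intro sum.cong refl)
    fix i :: 'a
    show "(\<Sum>j\<in>UNIV. blk (C $ i $ j) $ fst x $ fst y * (if snd x = i \<and> snd y = j then 1 else 0)) =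
       (if snd x = i then blk (C $ i $ snd y) $ fst x $ fst y else 0)"
      by (cases "snd x = i") (simp_all add: sum.delta if_distrib[of "\<lambda>t. _ * t"] cong: if_cong)
  qed
  also have "\<dots> = blk (C $ snd x $ snd y) $ fst x $ fst y" by (simp add: sum.delta)
  finally show ?thesis .
qed

lemma blk_entry: "blk c $ a $ b = 1/4 * (if a = b then 1 + c else 1 - c)"
  by (simp add: blk_def)

definition sig :: "2 \<Rightarrow> complex" where "sig a = (if a = 1 then 1 else -1)"

lemma sig_sq: "sig a * sig a = 1" by (simp add: sig_def)
lemma sig_prod: "sig a * sig b = (if a = b then 1 else -1)"
  using exhaust_2[of a] exhaust_2[of b] by (auto simp: sig_def)
lemma sig_real: "sig a = of_real (if a = 1 then 1 else -1)" by (simp add: sig_def)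

lemma delta_double_sum: assumes fI: "finite I" shows "(\<Sum>k\<in>I. \<Sum>l\<in>I. a k * b l * (if k = l then 1 else 0)) = (\<Sum>k\<in>I. a k * (b k :: complex))"
proof -
  have "(\<Sum>l\<in>I. a k * b l * (if k = l then 1 else 0)) = (if k \<in> I then a k * b k else 0)" for k
    using fI by (simp add: sum.delta sum.delta' if_distrib[of "\<lambda>t. _ * t"] cong: if_cong)
  then show ?thesis by (simp cong: sum.cong)
qed

lemma add_self: "A + A = sc 2 A" by (simp add: fun_eq_iff sc_def)
lemma sc_cancel: "sc c A = sc c B \<Longrightarrow> c \<noteq> 0 \<Longrightarrow> A = B"
  by (simp add: fun_eq_iff sc_def)

lemma herm_mm_self_adj: "herm N \<Longrightarrow> mm d (adj N) N = mm d N N" by (simp add: herm_def)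

lemma cpsd_exists:
  fixes C :: "real^'n^'n"
  assumes E: "C \<in> elliptope"
  shows "\<exists>d. cpsd_factorization (P_mat C) d"
proof -
  have psd: "psd_real C" and diag: "\<And>i. C $ i $ i = 1" using E by (auto simp: elliptope_def)
  obtain s :: nat and \<alpha> :: "'n \<Rightarrow> nat \<Rightarrow> real" where g1: "\<forall>i j. C $ i $ j = (\<Sum>k<s. \<alpha> i k * \<alpha> j k)"
    using gram_coords[OF psd] by blast
  define D :: nat where "D = 2^s"
  have D1: "D \<ge> 1" by (simp add: D_def)
  define Y where "Y i = (\<Sum>k\<in>{..<s}. sc (of_real (\<alpha> i k)) (gam s k))" for i
  have tcY: "tc D (Y i)" for i by (simp add: Y_def D_def)
  have hY: "herm (Y i)" for i by (simp add: Y_def gam_herm)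
  have trY: "tr D (Y i) = 0" for i by (simp add: Y_def tr_sum tr_sc D_def tr_gam)
  have antiY: "mm D (Y i) (Y j) + mm D (Y j) (Y i) = sc (2 * of_real (C $ i $ j)) (idm D)" for i j
  proof -
    have "mm D (Y i) (Y j) + mm D (Y j) (Y i) =
       sc (2 * (\<Sum>k\<in>{..<s}. \<Sum>l\<in>{..<s}. of_real (\<alpha> i k) * of_real (\<alpha> j l) * (if k = l then 1 else 0))) (idm D)"
      unfolding Y_def D_def
    proof (rule anticomm_lin[where M="\<lambda>k l. if k = l then 1 else 0" and R="idm (2^s)"])
      show "finite {..<s}" by simp
      fix k l assume "k \<in> {..<s}" "l \<in> {..<s}"
      then show "mm (2^s) (gam s k) (gam s l) + mm (2^s) (gam s l) (gam s k) = sc (2 * (if k = l then 1 else 0)) (idm (2^s))"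
        by (intro gam_anticomm) auto
    qed
    also have "(\<Sum>k\<in>{..<s}. \<Sum>l\<in>{..<s}. of_real (\<alpha> i k) * of_real (\<alpha> j l) * (if k = l then 1 else 0)) = (of_real (C $ i $ j) :: complex)"
      unfolding delta_double_sum[OF finite_lessThan] using g1 by (simp add: of_real_sum)
    finally show ?thesis .
  qed
  have YY: "mm D (Y i) (Y i) = idm D" for i
  proof -
    have "sc 2 (mm D (Y i) (Y i)) = sc 2 (idm D)"
      using antiY[of i i] diag[of i] by (simp only: add_self of_real_1 mult_1_right)
    then show ?thesis by (rule sc_cancel) simp
  qed
  have trYY: "tr D (mm D (Y i) (Y j)) = of_nat D * of_real (C $ i $ j)" for i j
  proof -
    have "tr D (mm D (Y i) (Y j)) + tr D (mm D (Y j) (Y i)) = 2 * of_real (C $ i $ j) * of_nat D"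
      using arg_cong[OF antiY[of i j], of "tr D"] by (simp add: tr_add tr_sc tr_idm)
    then show ?thesis using tr_mm_comm[of D "Y j" "Y i"] by simp
  qed
  define N where "N a i = idm D + sc (sig a) (Y i)" for a i
  have tcN: "tc D (N a i)" for a i by (simp add: N_def tcY)
  have hN: "herm (N a i)" for a i by (simp add: N_def sig_real hY)
  have NN: "mm D (N a i) (N a i) = sc 2 (N a i)" for a i
  proof -
    have "mm D (N a i) (N a i) = idm D + sc (sig a) (Y i) + sc (sig a) (Y i) + sc (sig a * sig a) (mm D (Y i) (Y i))"
      by (simp add: N_def mm_add_left mm_add_right mm_sc_left mm_sc_right mm_idm_left mm_idm_right tcY sc_sc sc_add add.assoc)
    also have "\<dots> = idm D + sc (sig a) (Y i) + sc (sig a) (Y i) + idm D"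
      by (simp only: sig_sq YY sc_one)
    also have "\<dots> = sc 2 (N a i)"
      by (simp add: N_def fun_eq_iff sc_def)
    finally show ?thesis .
  qed
  have trNN: "tr D (mm D (N a i) (N b j)) = of_nat D * (1 + sig a * sig b * of_real (C $ i $ j))" for a b i j
    by (simp add: N_def mm_add_left mm_add_right mm_sc_left mm_sc_right mm_idm_left mm_idm_right tcY
        tr_add tr_sc trY trYY tr_idm algebra_simps)
  define Pf where "Pf x = sc (of_real (1 / (2 * sqrt D))) (N (fst x) (snd x))" for x :: "2 \<times> 'n"
  have psdP: "herm_psd D (Pf x)" for x
  proof -
    have h: "herm_psd D (sc (of_real (1 / (4 * sqrt D))) (mm D (adj (N (fst x) (snd x))) (N (fst x) (snd x))))"
      by (rule psd_scale[OF psd_gram]) simp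
    have "mm D (adj (N (fst x) (snd x))) (N (fst x) (snd x)) = sc 2 (N (fst x) (snd x))"
      using hN NN unfolding herm_def by simp
    then have "sc (of_real (1 / (4 * sqrt D))) (mm D (adj (N (fst x) (snd x))) (N (fst x) (snd x))) = Pf x"
      by (simp add: Pf_def sc_sc)
    then show ?thesis using h by simp
  qed
  have trP: "tr_prod D (Pf x) (Pf y) = complex_of_real (P_mat C $ x $ y)" for x y
  proof -
    have sD: "complex_of_real (1 / (2 * sqrt D)) * complex_of_real (1 / (2 * sqrt D)) = 1 / (4 * of_nat D)"
    proof -
      have "(1 / (2 * sqrt D)) * (1 / (2 * sqrt D)) = 1 / (4 * real D)" using D1 by (simp add: field_simps)
      then show ?thesis by (metis of_real_mult of_real_divide of_real_1 of_real_mult of_real_numeral of_real_of_nat_eq)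
    qed
    have "tr_prod D (Pf x) (Pf y) = of_real (1 / (2 * sqrt D)) * of_real (1 / (2 * sqrt D)) * tr D (mm D (N (fst x) (snd x)) (N (fst y) (snd y)))"
      by (simp add: tr_prod_eq Pf_def mm_sc_left mm_sc_right tr_sc)
    also have "\<dots> = (1 + sig (fst x) * sig (fst y) * of_real (C $ snd x $ snd y)) / 4"
      using D1 unfolding trNN sD by (simp add: field_simps)
    also have "\<dots> = complex_of_real (P_mat C $ x $ y)"
      by (simp add: P_mat_entry blk_entry sig_prod)
    finally show ?thesis .
  qed
  have "cpsd_factorization (P_mat C) D"
    unfolding cpsd_factorization_def using D1 psdP trP by (intro conjI exI[of _ Pf]) auto
  then show ?thesis by blast
qed



lemma sum4_swap:
  "(\<Sum>i\<in>A. \<Sum>j\<in>A. \<Sum>k\<in>K. \<Sum>l\<in>K. f i j k l) = (\<Sum>k\<in>K. \<Sum>l\<in>K. \<Sum>i\<in>A. \<Sum>j\<in>A. f i j k l)"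
proof -
  have "(\<Sum>i\<in>A. \<Sum>j\<in>A. \<Sum>k\<in>K. \<Sum>l\<in>K. f i j k l) = (\<Sum>i\<in>A. \<Sum>k\<in>K. \<Sum>j\<in>A. \<Sum>l\<in>K. f i j k l)"
    by (rule sum.cong[OF refl], rule sum.swap)
  also have "\<dots> = (\<Sum>k\<in>K. \<Sum>i\<in>A. \<Sum>j\<in>A. \<Sum>l\<in>K. f i j k l)" by (rule sum.swap)
  also have "\<dots> = (\<Sum>k\<in>K. \<Sum>i\<in>A. \<Sum>l\<in>K. \<Sum>j\<in>A. f i j k l)"
    by (rule sum.cong[OF refl], rule sum.cong[OF refl], rule sum.swap)
  also have "\<dots> = (\<Sum>k\<in>K. \<Sum>l\<in>K. \<Sum>i\<in>A. \<Sum>j\<in>A. f i j k l)"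
    by (rule sum.cong[OF refl], rule sum.swap)
  finally show ?thesis .
qed

lemma quad_coords:
  fixes x :: "real^'n" and \<alpha> :: "'n \<Rightarrow> nat \<Rightarrow> real"
  shows "(\<Sum>i\<in>UNIV. \<Sum>j\<in>UNIV. x $ i * (\<Sum>k<s. \<Sum>l<s. \<alpha> i k * F k l * \<alpha> j l) * x $ j)
    = (\<Sum>k<s. \<Sum>l<s. (\<Sum>i\<in>UNIV. x $ i * \<alpha> i k) * F k l * (\<Sum>j\<in>UNIV. x $ j * \<alpha> j l))"
proof -
  have "(\<Sum>i\<in>UNIV. \<Sum>j\<in>UNIV. x $ i * (\<Sum>k<s. \<Sum>l<s. \<alpha> i k * F k l * \<alpha> j l) * x $ j)
      = (\<Sum>i\<in>UNIV. \<Sum>j\<in>UNIV. \<Sum>k<s. \<Sum>l<s. (x $ i * \<alpha> i k) * F k l * (x $ j * \<alpha> j l))"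
    by (simp add: sum_distrib_left sum_distrib_right mult.commute mult.left_commute)
  also have "\<dots> = (\<Sum>k<s. \<Sum>l<s. \<Sum>i\<in>UNIV. \<Sum>j\<in>UNIV. (x $ i * \<alpha> i k) * F k l * (x $ j * \<alpha> j l))"
    by (rule sum4_swap)
  also have "\<dots> = (\<Sum>k<s. \<Sum>l<s. (\<Sum>i\<in>UNIV. x $ i * \<alpha> i k) * F k l * (\<Sum>j\<in>UNIV. x $ j * \<alpha> j l))"
    apply (simp add: sum_distrib_left sum_distrib_right)
    apply (rule sum.cong[OF refl], rule sum.cong[OF refl], rule sum.swap)
    done
  finally show ?thesis .
qed

lemma bound_form:
  fixes y :: "nat \<Rightarrow> real"
  shows "\<bar>\<Sum>k<s. \<Sum>l<s. y k * T k l * y l\<bar> \<le> (\<Sum>k<s. \<Sum>l<s. \<bar>T k l\<bar>) * (\<Sum>k<s. y k * y k)"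
proof -
  let ?Y = "\<Sum>k<s. y k * y k"
  have yk: "y k * y k \<le> ?Y" if "k < s" for k
    using member_le_sum[of k "{..<s}" "\<lambda>k. y k * y k"] that by simp
  have yy: "\<bar>y k\<bar> * \<bar>y l\<bar> \<le> ?Y" if "k < s" "l < s" for k l
  proof -
    have "2 * (\<bar>y k\<bar> * \<bar>y l\<bar>) \<le> y k * y k + y l * y l"
      using sum_squares_ge_zero[of "\<bar>y k\<bar> - \<bar>y l\<bar>" 0]
      by (simp add: algebra_simps power2_eq_square abs_mult_self_eq)
    then show ?thesis using yk[OF that(1)] yk[OF that(2)] by linarith
  qed
  have "\<bar>\<Sum>k<s. \<Sum>l<s. y k * T k l * y l\<bar> \<le> (\<Sum>k<s. \<Sum>l<s. \<bar>y k * T k l * y l\<bar>)"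
    by (rule order_trans[OF sum_abs], rule sum_mono, rule sum_abs)
  also have "\<dots> \<le> (\<Sum>k<s. \<Sum>l<s. \<bar>T k l\<bar> * ?Y)"
  proof (intro sum_mono)
    fix k l assume "k \<in> {..<s}" "l \<in> {..<s}"
    then have "\<bar>y k\<bar> * \<bar>y l\<bar> \<le> ?Y" using yy by simp
    then have "\<bar>T k l\<bar> * (\<bar>y k\<bar> * \<bar>y l\<bar>) \<le> \<bar>T k l\<bar> * ?Y" by (simp add: mult_left_mono)
    then show "\<bar>y k * T k l * y l\<bar> \<le> \<bar>T k l\<bar> * ?Y" by (simp add: abs_mult mult_ac)
  qed
  also have "\<dots> = (\<Sum>k<s. \<Sum>l<s. \<bar>T k l\<bar>) * ?Y" by (simp add: sum_distrib_right)
  finally show ?thesis .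
qed

lemma scaleR_mat_vec: "(t *\<^sub>R A) *v x = t *\<^sub>R (A *v x)" for A :: "real^'n^'m"
  by (simp add: vec_eq_iff matrix_vector_mult_def sum_distrib_left mult.assoc)

lemma extreme_perturb:
  fixes C :: "real^'n^'n" and \<alpha> :: "'n \<Rightarrow> nat \<Rightarrow> real"
  assumes ext: "C extreme_point_of elliptope"
    and g1: "\<forall>i j. C $ i $ j = (\<Sum>k<s. \<alpha> i k * \<alpha> j k)"
    and Tsym: "\<forall>k l. T k l = T l k"
    and Tz: "\<forall>i. (\<Sum>k<s. \<Sum>l<s. \<alpha> i k * T k l * \<alpha> i l) = 0"
  shows "(\<Sum>k<s. \<Sum>l<s. \<alpha> i k * T k l * \<alpha> j l) = 0"
proof (rule ccontr)
  assume ne: "(\<Sum>k<s. \<Sum>l<s. \<alpha> i k * T k l * \<alpha> j l) \<noteq> 0"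
  define Dm :: "real^'n^'n" where "Dm = (\<chi> i j. \<Sum>k<s. \<Sum>l<s. \<alpha> i k * T k l * \<alpha> j l)"
  define S where "S = (\<Sum>k<s. \<Sum>l<s. \<bar>T k l\<bar>)"
  have S0: "S \<ge> 0" by (simp add: S_def sum_nonneg)
  define \<epsilon> where "\<epsilon> = 1 / (1 + S)"
  have eps: "\<epsilon> > 0" "\<epsilon> * S \<le> 1" using S0 by (auto simp: \<epsilon>_def field_simps)
  have CE: "C \<in> elliptope" using ext by (simp add: extreme_point_of_def)
  have Csym: "transpose C = C" using CE by (simp add: elliptope_def psd_real_def)
  have diag: "C $ i $ i = 1" for i using CE by (simp add: elliptope_def)
  have Dsym: "transpose Dm = Dm"
  proof -
    have "(\<Sum>k<s. \<Sum>l<s. \<alpha> j k * T k l * \<alpha> i l) = (\<Sum>k<s. \<Sum>l<s. \<alpha> i k * T k l * \<alpha> j l)" for i j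
    proof -
      have "(\<Sum>k<s. \<Sum>l<s. \<alpha> j k * T k l * \<alpha> i l) = (\<Sum>l<s. \<Sum>k<s. \<alpha> j k * T k l * \<alpha> i l)"
        by (rule sum.swap)
      also have "\<dots> = (\<Sum>k<s. \<Sum>l<s. \<alpha> i k * T k l * \<alpha> j l)"
        using Tsym by (simp add: mult.commute mult.left_commute)
      finally show ?thesis .
    qed
    then show ?thesis by (simp add: transpose_def Dm_def vec_eq_iff)
  qed
  have Ddiag: "Dm $ i $ i = 0" for i using Tz by (simp add: Dm_def)
  have Cform: "C = (\<chi> i j. \<Sum>k<s. \<Sum>l<s. \<alpha> i k * (if k = l then 1 else 0) * \<alpha> j l)"
    using g1 by (simp add: vec_eq_iff if_distrib[of "\<lambda>t. _ * t"] if_distrib[of "\<lambda>t. t * _"] cong: if_cong)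
  have inE: "C + t *\<^sub>R Dm \<in> elliptope" if "\<bar>t\<bar> \<le> \<epsilon>" for t
  proof -
    have "transpose (C + t *\<^sub>R Dm) = C + t *\<^sub>R Dm"
      using Csym Dsym by (simp add: transpose_def vec_eq_iff)
    moreover have "0 \<le> x \<bullet> ((C + t *\<^sub>R Dm) *v x)" for x
    proof -
      define y where "y k = (\<Sum>i\<in>UNIV. x $ i * \<alpha> i k)" for k
      have qC: "x \<bullet> (C *v x) = (\<Sum>k<s. y k * y k)"
      proof -
        have "x \<bullet> (C *v x) = (\<Sum>k<s. \<Sum>l<s. y k * (if k = l then 1 else 0) * y l)"
          by (subst Cform) (simp only: quad_vec vec_lambda_beta quad_coords y_def)
        also have "\<dots> = (\<Sum>k<s. y k * y k)"
          by (simp add: if_distrib[of "\<lambda>t. _ * t"] if_distrib[of "\<lambda>t. t * _"] cong: if_cong)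
        finally show ?thesis .
      qed
      have qD: "x \<bullet> (Dm *v x) = (\<Sum>k<s. \<Sum>l<s. y k * T k l * y l)"
        unfolding Dm_def by (simp only: quad_vec vec_lambda_beta quad_coords y_def)
      have lin: "x \<bullet> ((C + t *\<^sub>R Dm) *v x) = x \<bullet> (C *v x) + t * (x \<bullet> (Dm *v x))"
        by (simp add: matrix_vector_mult_add_rdistrib inner_add_right scaleR_mat_vec)
      have b: "\<bar>x \<bullet> (Dm *v x)\<bar> \<le> S * (\<Sum>k<s. y k * y k)" unfolding qD S_def by (rule bound_form)
      have Y0: "0 \<le> (\<Sum>k<s. y k * y k)" by (simp add: sum_nonneg)
      have "\<bar>t * (x \<bullet> (Dm *v x))\<bar> \<le> \<epsilon> * (S * (\<Sum>k<s. y k * y k))"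
        unfolding abs_mult using that b by (intro mult_mono) auto
      also have "\<dots> \<le> (\<Sum>k<s. y k * y k)" using eps(2) Y0
        by (metis mult.assoc mult_left_le_one_le mult_nonneg_nonneg S0 eps(1) less_le)
      finally show ?thesis unfolding lin qC by linarith
    qed
    ultimately have "psd_real (C + t *\<^sub>R Dm)" by (simp add: psd_real_def)
    moreover have "(C + t *\<^sub>R Dm) $ k $ k = 1" for k using diag Ddiag by simp
    ultimately show ?thesis by (simp add: elliptope_def)
  qed
  have E1: "C + \<epsilon> *\<^sub>R Dm \<in> elliptope" using inE eps by simp
  have E2: "C - \<epsilon> *\<^sub>R Dm \<in> elliptope" using inE[of "-\<epsilon>"] eps by simp
  have Dne: "Dm \<noteq> 0" using ne by (auto simp: Dm_def vec_eq_iff)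
  have neq: "C + \<epsilon> *\<^sub>R Dm \<noteq> C - \<epsilon> *\<^sub>R Dm"
  proof
    assume h: "C + \<epsilon> *\<^sub>R Dm = C - \<epsilon> *\<^sub>R Dm"
    have "Dm = 0"
    proof (rule vec_eq_iff[THEN iffD2], intro allI)
      fix a
      have "Dm $ a = 0" using arg_cong[OF h, of "\<lambda>M. M $ a"] eps(1) by (simp add: vec_eq_iff)
      then show "Dm $ a = 0 $ a" by simp
    qed
    then show False using Dne by simp
  qed
  have mid: "midpoint (C + \<epsilon> *\<^sub>R Dm) (C - \<epsilon> *\<^sub>R Dm) = C"
    by (simp add: midpoint_def vec_eq_iff field_simps)
  have "C \<in> open_segment (C + \<epsilon> *\<^sub>R Dm) (C - \<epsilon> *\<^sub>R Dm)"
    using midpoint_in_open_segment[of "C + \<epsilon> *\<^sub>R Dm" "C - \<epsilon> *\<^sub>R Dm"] neq mid by metis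
  then show False using ext E1 E2 unfolding extreme_point_of_def by blast
qed



interpretation cmv: vector_space "sc :: complex \<Rightarrow> cm \<Rightarrow> cm"
  by unfold_locales (simp_all add: sc_add sc_add_left sc_sc)

lemma mm_neg_left: "mm d (- A) B = - mm d A B"
  by (simp add: fun_eq_iff mm_def sum_negf)
lemma sc_neg1: "sc (-1) A = - A" by (simp add: fun_eq_iff sc_def)
lemma mm_neg_right: "mm d A (- B) = - mm d A B"
  by (simp add: fun_eq_iff mm_def sum_negf)
lemma sc_neg: "sc c (- A) = sc (- c) A" by (simp add: fun_eq_iff sc_def)
lemma tr_neg: "tr d (- A) = - tr d A" by (simp add: tr_def sum_negf)

locale cliff =
  fixes d m :: nat and Y :: "nat \<Rightarrow> cm" and Q :: cm
  assumes tcY: "\<And>k. k < m \<Longrightarrow> tc d (Y k)"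
    and hY: "\<And>k. k < m \<Longrightarrow> herm (Y k)"
    and tcQ: "tc d Q" and hQ: "herm Q" and Qne: "Q \<noteq> 0"
    and anti: "\<And>k l. k < m \<Longrightarrow> l < m \<Longrightarrow>
        mm d (Y k) (Y l) + mm d (Y l) (Y k) = sc (2 * (if k = l then 1 else 0)) (mm d Q Q)"
    and evm: "even m"
begin

definition R :: cm where "R = mm d Q Q"

primrec fprod :: "nat \<Rightarrow> nat set \<Rightarrow> cm" where
  "fprod 0 S = idm d"
| "fprod (Suc n) S = (if n \<in> S then mm d (fprod n S) (Y n) else fprod n S)"

primrec gprod :: "nat \<Rightarrow> nat set \<Rightarrow> cm" where
  "gprod 0 S = idm d"
| "gprod (Suc n) S = (if n \<in> S then mm d (Y n) (gprod n S) else gprod n S)"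

primrec rp :: "nat \<Rightarrow> cm" where
  "rp 0 = idm d"
| "rp (Suc e) = mm d R (rp e)"

primrec qp :: "nat \<Rightarrow> cm" where
  "qp 0 = idm d"
| "qp (Suc e) = mm d Q (qp e)"

lemma tcR: "tc d R" by (simp add: R_def)
lemma tc_fprod: "tc d (fprod n S)" by (induction n) auto
lemma tc_gprod: "tc d (gprod n S)" by (induction n) auto
lemma tc_rp: "tc d (rp e)" by (induction e) (auto simp: R_def)
lemma tc_qp: "tc d (qp e)" by (induction e) auto

lemma YY: "k < m \<Longrightarrow> mm d (Y k) (Y k) = R"
proof -
  assume k: "k < m"
  have "sc 2 (mm d (Y k) (Y k)) = sc 2 R" using anti[OF k k] by (simp add: add_self R_def)
  then show ?thesis by (rule sc_cancel) simp
qed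

lemma Y_anti: "k < m \<Longrightarrow> l < m \<Longrightarrow> k \<noteq> l \<Longrightarrow> mm d (Y k) (Y l) = - mm d (Y l) (Y k)"
proof -
  assume "k < m" "l < m" "k \<noteq> l"
  then have "mm d (Y k) (Y l) + mm d (Y l) (Y k) = 0" using anti by simp
  then show ?thesis by (simp add: eq_neg_iff_add_eq_0)
qed

lemma R_Y: "k < m \<Longrightarrow> mm d R (Y k) = mm d (Y k) R"
  by (simp add: YY[symmetric] mm_assoc)

lemma R_fprod: "n \<le> m \<Longrightarrow> mm d R (fprod n S) = mm d (fprod n S) R"
proof (induction n)
  case 0 then show ?case by (simp add: mm_idm_left mm_idm_right tcR)
next
  case (Suc n)
  then have n: "n < m" by simp
  show ?case
  proof (cases "n \<in> S")
    case True
    have "mm d R (mm d (fprod n S) (Y n)) = mm d (mm d (fprod n S) R) (Y n)"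
      using Suc by (simp add: mm_assoc[symmetric])
    also have "\<dots> = mm d (mm d (fprod n S) (Y n)) R" by (simp add: mm_assoc R_Y[OF n])
    finally show ?thesis using True by simp
  next
    case False then show ?thesis using Suc by simp
  qed
qed

lemma rp_Y: "k < m \<Longrightarrow> mm d (rp e) (Y k) = mm d (Y k) (rp e)"
proof (induction e)
  case 0 then show ?case using tcY by (simp add: mm_idm_left mm_idm_right)
next
  case (Suc e)
  then show ?case by (simp add: mm_assoc R_Y[symmetric]) (simp add: mm_assoc[symmetric] R_Y)
qed

lemma rp_fprod: "n \<le> m \<Longrightarrow> mm d (rp e) (fprod n S) = mm d (fprod n S) (rp e)"
proof (induction e)
  case 0 then show ?case using tc_fprod by (simp add: mm_idm_left mm_idm_right)
next
  case (Suc e)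
  have "mm d (mm d R (rp e)) (fprod n S) = mm d R (mm d (fprod n S) (rp e))"
    using Suc by (simp add: mm_assoc)
  also have "\<dots> = mm d (fprod n S) (mm d R (rp e))"
    using R_fprod[OF Suc.prems] by (simp add: mm_assoc[symmetric])
  finally show ?case by simp
qed

lemma rp_add: "mm d (rp a) (rp b) = rp (a + b)"
  by (induction a) (simp_all add: mm_idm_left tc_rp mm_assoc)

definition sgn_of :: "nat \<Rightarrow> nat \<Rightarrow> nat set \<Rightarrow> complex" where
  "sgn_of k n S = (-1) ^ card ((S \<inter> {..<n}) - {k})"

lemma Y_fprod: "k < m \<Longrightarrow> n \<le> m \<Longrightarrow> mm d (Y k) (fprod n S) = sc (sgn_of k n S) (mm d (fprod n S) (Y k))"
proof (induction n)
  case 0 then show ?case using tcY by (simp add: mm_idm_left mm_idm_right sgn_of_def)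
next
  case (Suc n)
  then have n: "n < m" and IH: "mm d (Y k) (fprod n S) = sc (sgn_of k n S) (mm d (fprod n S) (Y k))" by auto
  show ?case
  proof (cases "n \<in> S")
    case False
    then have "S \<inter> {..<Suc n} = S \<inter> {..<n}" by (auto simp: less_Suc_eq)
    then show ?thesis using False IH by (simp add: sgn_of_def)
  next
    case True
    have eq: "mm d (Y k) (mm d (fprod n S) (Y n)) = sc (sgn_of k n S) (mm d (fprod n S) (mm d (Y k) (Y n)))"
      by (simp add: mm_assoc[symmetric] IH mm_sc_left)
    show ?thesis
    proof (cases "k = n")
      case True
      have "(S \<inter> {..<Suc n}) - {k} = (S \<inter> {..<n}) - {k}" using True by (auto simp: less_Suc_eq)
      then have "sgn_of k (Suc n) S = sgn_of k n S" by (simp add: sgn_of_def)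
      then show ?thesis using eq True \<open>n \<in> S\<close> by (simp add: mm_assoc)
    next
      case False
      have "(S \<inter> {..<Suc n}) - {k} = insert n ((S \<inter> {..<n}) - {k})" using False \<open>n \<in> S\<close> by (auto simp: less_Suc_eq)
      then have sg: "sgn_of k (Suc n) S = - sgn_of k n S" by (simp add: sgn_of_def)
      have a: "mm d (Y k) (Y n) = - mm d (Y n) (Y k)" using Y_anti[OF Suc.prems(1) n False] .
      have "mm d (Y k) (mm d (fprod n S) (Y n)) = sc (sgn_of k n S) (- mm d (fprod n S) (mm d (Y n) (Y k)))"
        unfolding eq a mm_neg_right ..
      also have "\<dots> = sc (- sgn_of k n S) (mm d (mm d (fprod n S) (Y n)) (Y k))"
        by (simp only: sc_neg mm_assoc)
      finally have "mm d (Y k) (mm d (fprod n S) (Y n)) = sc (- sgn_of k n S) (mm d (mm d (fprod n S) (Y n)) (Y k))" .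
      then show ?thesis using \<open>n \<in> S\<close> sg by simp
    qed
  qed
qed

lemma Y_gprod: "k < m \<Longrightarrow> n \<le> m \<Longrightarrow> mm d (Y k) (gprod n S) = sc (sgn_of k n S) (mm d (gprod n S) (Y k))"
proof (induction n)
  case 0 then show ?case using tcY by (simp add: mm_idm_left mm_idm_right sgn_of_def)
next
  case (Suc n)
  then have n: "n < m" and IH: "mm d (Y k) (gprod n S) = sc (sgn_of k n S) (mm d (gprod n S) (Y k))" by auto
  show ?case
  proof (cases "n \<in> S")
    case False
    then have "S \<inter> {..<Suc n} = S \<inter> {..<n}" by (auto simp: less_Suc_eq)
    then show ?thesis using False IH by (simp add: sgn_of_def)
  next
    case True
    show ?thesis
    proof (cases "k = n")
      case True
      have "(S \<inter> {..<Suc n}) - {k} = (S \<inter> {..<n}) - {k}" using True by (auto simp: less_Suc_eq)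
      then have "sgn_of k (Suc n) S = sgn_of k n S" by (simp add: sgn_of_def)
      have "mm d (Y n) (mm d (Y n) (gprod n S)) = sc (sgn_of k n S) (mm d (Y n) (mm d (gprod n S) (Y n)))"
        using IH True by (simp only: mm_sc_right)
      also have "\<dots> = sc (sgn_of k n S) (mm d (mm d (Y n) (gprod n S)) (Y n))" by (simp only: mm_assoc)
      finally show ?thesis using True \<open>n \<in> S\<close> \<open>sgn_of k (Suc n) S = sgn_of k n S\<close> by simp
    next
      case False
      have "(S \<inter> {..<Suc n}) - {k} = insert n ((S \<inter> {..<n}) - {k})" using False \<open>n \<in> S\<close> by (auto simp: less_Suc_eq)
      then have sg: "sgn_of k (Suc n) S = - sgn_of k n S" by (simp add: sgn_of_def)
      have a: "mm d (Y k) (Y n) = - mm d (Y n) (Y k)" using Y_anti[OF Suc.prems(1) n False] .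
      have "mm d (Y k) (mm d (Y n) (gprod n S)) = mm d (- mm d (Y n) (Y k)) (gprod n S)"
        by (simp add: mm_assoc[symmetric] a)
      also have "\<dots> = - mm d (Y n) (mm d (Y k) (gprod n S))" by (simp add: mm_neg_left mm_assoc)
      also have "\<dots> = - sc (sgn_of k n S) (mm d (Y n) (mm d (gprod n S) (Y k)))"
        by (simp only: IH mm_sc_right)
      also have "\<dots> = sc (- sgn_of k n S) (mm d (mm d (Y n) (gprod n S)) (Y k))"
        by (simp add: mm_assoc fun_eq_iff sc_def)
      finally show ?thesis using \<open>n \<in> S\<close> sg by simp
    qed
  qed
qed

end



context cliff
begin

definition sdf :: "nat set \<Rightarrow> nat set \<Rightarrow> nat set" where "sdf S T = (S - T) \<union> (T - S)"

lemma fprod_gprod: "n \<le> m \<Longrightarrow> \<exists>\<sigma>. mm d (fprod n S) (gprod n T) = sc \<sigma> (mm d (rp (card (S \<inter> T \<inter> {..<n}))) (fprod n (sdf S T)))"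
proof (induction n)
  case 0 then show ?case by (intro exI[of _ 1]) (simp add: mm_idm_left)
next
  case (Suc n)
  then have n: "n < m" and "n \<le> m" by auto
  then obtain \<sigma> where IH: "mm d (fprod n S) (gprod n T) = sc \<sigma> (mm d (rp (card (S \<inter> T \<inter> {..<n}))) (fprod n (sdf S T)))"
    using Suc.IH by blast
  let ?e = "card (S \<inter> T \<inter> {..<n})"
  let ?F = "fprod n S" and ?G = "gprod n T" and ?F' = "fprod n (sdf S T)"
  show ?case
  proof (cases "n \<in> S"; cases "n \<in> T")
    assume a: "n \<in> S" "n \<in> T"
    have c: "S \<inter> T \<inter> {..<Suc n} = insert n (S \<inter> T \<inter> {..<n})" using a by (auto simp: less_Suc_eq)
    have ns: "n \<notin> sdf S T" using a by (simp add: sdf_def)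
    have "mm d (mm d ?F (Y n)) (mm d (Y n) ?G) = mm d ?F (mm d R ?G)"
      by (simp only: YY[OF n, symmetric] mm_assoc)
    also have "\<dots> = mm d R (mm d ?F ?G)"
      using R_fprod[OF \<open>n \<le> m\<close>] by (simp add: mm_assoc[symmetric])
    also have "\<dots> = sc \<sigma> (mm d (rp (Suc ?e)) ?F')"
      by (simp add: IH mm_sc_right mm_assoc)
    finally show ?thesis using a c ns by (intro exI[of _ \<sigma>]) simp
  next
    assume a: "n \<in> S" "n \<notin> T"
    have c: "S \<inter> T \<inter> {..<Suc n} = S \<inter> T \<inter> {..<n}" using a by (auto simp: less_Suc_eq)
    have ns: "n \<in> sdf S T" using a by (simp add: sdf_def)
    have "mm d (mm d ?F (Y n)) ?G = mm d ?F (sc (sgn_of n n T) (mm d ?G (Y n)))"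
      by (simp add: mm_assoc Y_gprod[OF n \<open>n \<le> m\<close>])
    also have "\<dots> = sc (sgn_of n n T * \<sigma>) (mm d (rp ?e) (mm d ?F' (Y n)))"
      by (simp add: mm_sc_right mm_assoc[symmetric] IH mm_sc_left sc_sc)
    finally show ?thesis using a c ns by (intro exI[of _ "sgn_of n n T * \<sigma>"]) simp
  next
    assume a: "n \<notin> S" "n \<in> T"
    have c: "S \<inter> T \<inter> {..<Suc n} = S \<inter> T \<inter> {..<n}" using a by (auto simp: less_Suc_eq)
    have ns: "n \<in> sdf S T" using a by (simp add: sdf_def)
    have "mm d ?F (mm d (Y n) ?G) = mm d ?F (sc (sgn_of n n T) (mm d ?G (Y n)))"
      by (simp add: Y_gprod[OF n \<open>n \<le> m\<close>])
    also have "\<dots> = sc (sgn_of n n T * \<sigma>) (mm d (rp ?e) (mm d ?F' (Y n)))"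
      by (simp add: mm_sc_right mm_assoc[symmetric] IH mm_sc_left sc_sc)
    finally show ?thesis using a c ns by (intro exI[of _ "sgn_of n n T * \<sigma>"]) simp
  next
    assume a: "n \<notin> S" "n \<notin> T"
    have c: "S \<inter> T \<inter> {..<Suc n} = S \<inter> T \<inter> {..<n}" using a by (auto simp: less_Suc_eq)
    have ns: "n \<notin> sdf S T" using a by (simp add: sdf_def)
    show ?thesis using a c ns IH by (intro exI[of _ \<sigma>]) simp
  qed
qed

lemma fprod_gprod_same: "n \<le> m \<Longrightarrow> mm d (fprod n S) (gprod n S) = rp (card (S \<inter> {..<n}))"
proof (induction n)
  case 0 then show ?case by (simp add: mm_idm_left)
next
  case (Suc n)
  then have n: "n < m" and nm: "n \<le> m" by auto
  show ?case
  proof (cases "n \<in> S")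
    case True
    have c: "S \<inter> {..<Suc n} = insert n (S \<inter> {..<n})" using True by (auto simp: less_Suc_eq)
    have "mm d (mm d (fprod n S) (Y n)) (mm d (Y n) (gprod n S)) = mm d (fprod n S) (mm d R (gprod n S))"
      by (simp only: YY[OF n, symmetric] mm_assoc)
    also have "\<dots> = mm d R (mm d (fprod n S) (gprod n S))"
      using R_fprod[OF nm] by (simp add: mm_assoc[symmetric])
    also have "\<dots> = rp (Suc (card (S \<inter> {..<n})))" using Suc by simp
    finally show ?thesis using True c by simp
  next
    case False
    then have "S \<inter> {..<Suc n} = S \<inter> {..<n}" by (auto simp: less_Suc_eq)
    then show ?thesis using False Suc by simp
  qed
qed

lemma tr_rp_fprod_zero:
  assumes ne: "U \<inter> {..<m} \<noteq> {}"
  shows "tr d (mm d (rp (Suc e)) (fprod m U)) = 0"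
proof -
  let ?V = "U \<inter> {..<m}"
  have finV: "finite ?V" by simp
  obtain k where k: "k < m" and odd: "odd (card (?V - {k}))"
  proof (cases "even (card ?V)")
    case True
    obtain k where kV: "k \<in> ?V" using ne by blast
    have c: "card (?V - {k}) = card ?V - 1" using kV finV by (simp add: card_Diff_singleton)
    have "card ?V > 0" using kV finV card_gt_0_iff by blast
    then have "odd (card (?V - {k}))" using True c by (cases "card ?V") auto
    moreover have "k < m" using kV by simp
    ultimately show ?thesis using that[of k] by blast
  next
    case False
    have le: "card ?V \<le> m" using card_mono[of "{..<m}" ?V] by simp
    have "card ?V \<noteq> m"
    proof
      assume "card ?V = m"
      then show False using False evm by simp
    qed
    then have lt: "card ?V < m" using le by linarith
    have "\<not> {..<m} \<subseteq> ?V"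
    proof
      assume "{..<m} \<subseteq> ?V"
      then have "card {..<m} \<le> card ?V" using card_mono[OF finV] by blast
      then show False using lt by simp
    qed
    then obtain k where k: "k < m" "k \<notin> ?V" by (auto simp only: subset_iff lessThan_iff)
    then have "?V - {k} = ?V" by blast
    then show ?thesis using that[of k] k(1) False by simp
  qed
  let ?F = "fprod m U" and ?P = "rp e" and ?Y = "Y k"
  have sgn: "sgn_of k m U = -1" using odd by (simp add: sgn_of_def)
  have YF: "mm d ?Y ?F = - mm d ?F ?Y" using Y_fprod[OF k order_refl, of U] sgn by (simp add: sc_neg1)
  have FY: "mm d ?F ?Y = - mm d ?Y ?F" using YF by simp
  have s1: "tr d (mm d (rp (Suc e)) ?F) = tr d (mm d ?Y (mm d ?Y (mm d ?P ?F)))"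
    by (simp only: rp.simps R_def[symmetric] YY[OF k, symmetric] mm_assoc)
  have PY: "mm d ?P (mm d ?Y ?F) = mm d ?Y (mm d ?P ?F)"
    by (simp only: mm_assoc[symmetric] rp_Y[OF k])
  have "tr d (mm d ?Y (mm d ?Y (mm d ?P ?F))) = tr d (mm d (mm d ?Y (mm d ?P ?F)) ?Y)" by (rule tr_mm_comm)
  also have "\<dots> = tr d (mm d ?Y (mm d ?P (mm d ?F ?Y)))" by (simp only: mm_assoc)
  also have "\<dots> = - tr d (mm d ?Y (mm d ?P (mm d ?Y ?F)))" by (simp only: FY mm_neg_right tr_neg)
  also have "\<dots> = - tr d (mm d ?Y (mm d ?Y (mm d ?P ?F)))" by (simp only: PY)
  finally have "tr d (mm d ?Y (mm d ?Y (mm d ?P ?F))) = 0" by simp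
  then show ?thesis using s1 by simp
qed

lemma qp_add: "mm d (qp a) (qp b) = qp (a + b)"
  by (induction a) (simp_all add: mm_idm_left tc_qp mm_assoc)

lemma qp1: "qp 1 = Q" using tcQ by (simp add: mm_idm_right)

lemma qp_comm: "mm d (qp e) Q = mm d Q (qp e)"
proof -
  have "mm d (qp e) (qp 1) = mm d (qp 1) (qp e)" by (simp only: qp_add add.commute)
  then show ?thesis by (simp only: qp1)
qed

lemma herm_qp: "herm (qp e)"
proof (induction e)
  case 0 then show ?case by simp
next
  case (Suc e)
  then show ?case using hQ unfolding herm_def by (simp add: adj_mm qp_comm)
qed

lemma rp_qp: "rp e = qp (2 * e)"
  by (induction e) (simp_all add: R_def mm_assoc)

lemma d_pos: "d > 0"
proof (rule ccontr)
  assume "\<not> d > 0"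
  then have "Q = 0" using tcQ by (simp add: tc_def fun_eq_iff)
  then show False using Qne by simp
qed

lemma herm_sq_ne: assumes "tc d A" "herm A" "A \<noteq> 0" shows "mm d A A \<noteq> 0"
proof
  assume "mm d A A = 0"
  then have "tr d (mm d A (adj A)) = 0" using assms(2) by (simp add: herm_def)
  then show False using hs_pos(1)[OF assms(1) assms(3)] by simp
qed

lemma qp_pow2_ne: "qp (2^j) \<noteq> 0"
proof (induction j)
  case 0 show ?case unfolding power_0 qp1 by (rule Qne)
next
  case (Suc j)
  have "qp (2^Suc j) = mm d (qp (2^j)) (qp (2^j))" by (simp add: qp_add mult_2)
  then show ?case using herm_sq_ne[OF tc_qp herm_qp Suc.IH] by metis
qed

lemma qp_ne: "qp e \<noteq> 0"
proof
  assume z: "qp e = 0"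
  have "e < 2^e" by (rule less_exp)
  then have "qp (2^e) = mm d (qp (2^e - e)) (qp e)" by (simp add: qp_add)
  then show False using z qp_pow2_ne[of e] by simp
qed

lemma tr_rp_ne: "tr d (rp e) \<noteq> 0"
proof -
  have "tr d (rp e) = tr d (mm d (qp e) (adj (qp e)))"
    using herm_qp[of e] unfolding herm_def by (simp add: rp_qp qp_add mult_2)
  then show ?thesis using hs_pos(1)[OF tc_qp qp_ne, of e] by auto
qed

end



definition em :: "nat \<Rightarrow> nat \<Rightarrow> cm" where "em k l = (\<lambda>a b. if a = k \<and> b = l then 1 else 0)"

lemma tc_in_span:
  assumes "tc d X"
  shows "X \<in> cmv.span ((\<lambda>(k, l). em k l) ` ({..<d} \<times> {..<d}))"
proof -
  let ?E = "(\<lambda>(k, l). em k l) ` ({..<d} \<times> {..<d})"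
  have "X = (\<Sum>p\<in>{..<d} \<times> {..<d}. sc (X (fst p) (snd p)) (em (fst p) (snd p)))"
  proof (rule tc_eqI[OF assms])
    show "tc d (\<Sum>p\<in>{..<d} \<times> {..<d}. sc (X (fst p) (snd p)) (em (fst p) (snd p)))"
      by (rule tc_sum) (auto simp: tc_def em_def sc_def)
    fix a b assume ab: "a < d" "b < d"
    have "(\<Sum>p\<in>{..<d} \<times> {..<d}. sc (X (fst p) (snd p)) (em (fst p) (snd p))) a b
        = (\<Sum>p\<in>{..<d} \<times> {..<d}. if p = (a, b) then X a b else 0)"
      unfolding fun_sum_apply2 by (intro sum.cong refl) (auto simp: sc_def em_def)
    also have "\<dots> = X a b" using ab by (simp add: sum.delta')
    finally show "X a b = (\<Sum>p\<in>{..<d} \<times> {..<d}. sc (X (fst p) (snd p)) (em (fst p) (snd p))) a b" by simp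
  qed
  also have "\<dots> \<in> cmv.span ?E"
    by (intro cmv.span_sum cmv.span_scale cmv.span_base) (fastforce simp: image_iff)
  finally show ?thesis .
qed

context cliff
begin

definition phi :: "nat set \<Rightarrow> cm \<Rightarrow> complex" where
  "phi T X = tr d (mm d (rp 1) (mm d X (gprod m T)))"

lemma phi_sum: "phi T (\<Sum>w\<in>t. sc (u w) w) = (\<Sum>w\<in>t. u w * phi T w)"
  by (simp add: phi_def mm_sum_left mm_sum_right mm_sc_left mm_sc_right tr_sum tr_sc)

lemma phi_off: assumes "S \<subseteq> {..<m}" "T \<subseteq> {..<m}" "S \<noteq> T" shows "phi T (fprod m S) = 0"
proof -
  obtain \<sigma> where e: "mm d (fprod m S) (gprod m T) = sc \<sigma> (mm d (rp (card (S \<inter> T \<inter> {..<m}))) (fprod m (sdf S T)))"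
    using fprod_gprod[of m S T] by blast
  have ne: "sdf S T \<inter> {..<m} \<noteq> {}" using assms by (auto simp: sdf_def)
  have "phi T (fprod m S) = \<sigma> * tr d (mm d (mm d (rp 1) (rp (card (S \<inter> T \<inter> {..<m})))) (fprod m (sdf S T)))"
    by (simp add: phi_def e mm_sc_right tr_sc mm_assoc)
  also have "\<dots> = \<sigma> * tr d (mm d (rp (Suc (card (S \<inter> T \<inter> {..<m})))) (fprod m (sdf S T)))"
    by (simp only: rp_add) simp
  also have "\<dots> = 0" using tr_rp_fprod_zero[OF ne] by simp
  finally show ?thesis .
qed

lemma phi_diag: "phi T (fprod m T) \<noteq> 0"
proof -
  have "phi T (fprod m T) = tr d (rp (1 + card (T \<inter> {..<m})))"
    by (simp add: phi_def fprod_gprod_same rp_add del: rp.simps)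
  then show ?thesis using tr_rp_ne by (simp del: rp.simps)
qed

theorem count_bound: "2 ^ m \<le> d ^ 2"
proof -
  let ?P = "Pow {..<m}"
  let ?Fam = "(\<lambda>S. fprod m S) ` ?P"
  let ?E = "(\<lambda>(k, l). em k l) ` ({..<d} \<times> {..<d})"
  have inj: "inj_on (\<lambda>S. fprod m S) ?P"
  proof (rule inj_onI)
    fix S T assume ST: "S \<in> ?P" "T \<in> ?P" "fprod m S = fprod m T"
    show "S = T"
    proof (rule ccontr)
      assume ne: "S \<noteq> T"
      have "S \<subseteq> {..<m}" "T \<subseteq> {..<m}" using ST by auto
      then have "phi T (fprod m S) = 0" using ne by (rule phi_off)
      then show False using ST(3) phi_diag[of T] by simp
    qed
  qed
  have cardF: "card ?Fam = 2 ^ m" using inj by (simp add: card_image card_Pow)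
  have ind: "cmv.independent ?Fam"
    unfolding cmv.dependent_explicit
  proof
    assume "\<exists>t u. finite t \<and> t \<subseteq> ?Fam \<and> (\<Sum>v\<in>t. sc (u v) v) = 0 \<and> (\<exists>v\<in>t. u v \<noteq> 0)"
    then obtain t u v where t: "finite t" "t \<subseteq> ?Fam" and z: "(\<Sum>v\<in>t. sc (u v) v) = 0"
      and v: "v \<in> t" "u v \<noteq> 0" by blast
    obtain T where T: "T \<in> ?P" "v = fprod m T" using t v by blast
    have "0 = phi T (\<Sum>v\<in>t. sc (u v) v)" using z by (simp add: phi_def)
    also have "\<dots> = (\<Sum>w\<in>t. u w * phi T w)" by (rule phi_sum)
    also have "\<dots> = u v * phi T v"
    proof (rule sum.remove[OF t(1) v(1), THEN trans])
      have "(\<Sum>w\<in>t - {v}. u w * phi T w) = 0"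
      proof (rule sum.neutral, intro ballI)
        fix w assume w: "w \<in> t - {v}"
        then obtain S where S: "S \<in> ?P" "w = fprod m S" using t by blast
        then have "S \<noteq> T" using w T by auto
        then show "u w * phi T w = 0" using S T phi_off by auto
      qed
      then show "u v * phi T v + (\<Sum>w\<in>t - {v}. u w * phi T w) = u v * phi T v" by simp
    qed
    finally have "u v * phi T v = 0" by simp
    then show False using v(2) phi_diag[of T] T by simp
  qed
  have sub: "?Fam \<subseteq> cmv.span ?E" using tc_in_span tc_fprod by blast
  have "card ?Fam \<le> card ?E" using cmv.independent_span_bound[OF _ ind sub] by simp
  also have "\<dots> \<le> card ({..<d} \<times> {..<d})" by (rule card_image_le) simp
  also have "\<dots> = d ^ 2" by (simp add: power2_eq_square)
  finally show ?thesis using cardF by simp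
qed

end



lemma two_neq: "(1::2) \<noteq> 2" by simp

lemma bilin_coords:
  fixes a b :: "'n::finite \<Rightarrow> real" and \<alpha> :: "'n \<Rightarrow> nat \<Rightarrow> real"
  shows "(\<Sum>i\<in>UNIV. \<Sum>j\<in>UNIV. a i * (\<Sum>k<s. \<Sum>l<s. \<alpha> i k * F k l * \<alpha> j l) * b j)
    = (\<Sum>k<s. \<Sum>l<s. (\<Sum>i\<in>UNIV. a i * \<alpha> i k) * F k l * (\<Sum>j\<in>UNIV. b j * \<alpha> j l))"
proof -
  have "(\<Sum>i\<in>UNIV. \<Sum>j\<in>UNIV. a i * (\<Sum>k<s. \<Sum>l<s. \<alpha> i k * F k l * \<alpha> j l) * b j)
      = (\<Sum>i\<in>UNIV. \<Sum>j\<in>UNIV. \<Sum>k<s. \<Sum>l<s. (a i * \<alpha> i k) * F k l * (b j * \<alpha> j l))"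
    by (simp add: sum_distrib_left sum_distrib_right mult.commute mult.left_commute)
  also have "\<dots> = (\<Sum>k<s. \<Sum>l<s. \<Sum>i\<in>UNIV. \<Sum>j\<in>UNIV. (a i * \<alpha> i k) * F k l * (b j * \<alpha> j l))"
    by (rule sum4_swap)
  also have "\<dots> = (\<Sum>k<s. \<Sum>l<s. (\<Sum>i\<in>UNIV. a i * \<alpha> i k) * F k l * (\<Sum>j\<in>UNIV. b j * \<alpha> j l))"
    apply (simp add: sum_distrib_left sum_distrib_right)
    apply (rule sum.cong[OF refl], rule sum.cong[OF refl], rule sum.swap)
    done
  finally show ?thesis .
qed

lemma delta2: "k < (s::nat) \<Longrightarrow> l < s \<Longrightarrow>
  (\<Sum>k'<s. \<Sum>l'<s. (if k = k' then 1 else 0) * F k' l' * (if l = l' then 1 else (0::real))) = F k l"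
proof -
  assume kl: "k < s" "l < s"
  have "(\<Sum>l'<s. (if k = k' then 1 else 0) * F k' l' * (if l = l' then 1 else (0::real))) = (if k = k' then F k' l else 0)" for k'
    using kl by (cases "k = k'") (simp_all add: if_distrib[of "\<lambda>t. _ * t"] cong: if_cong)
  then show ?thesis using kl by (simp add: sum.delta')
qed

lemma T_zero:
  fixes C :: "real^'n^'n" and \<alpha> :: "'n \<Rightarrow> nat \<Rightarrow> real"
  assumes ext: "C extreme_point_of elliptope"
    and g1: "\<forall>i j. C $ i $ j = (\<Sum>k<s. \<alpha> i k * \<alpha> j k)"
    and g2: "\<forall>k<s. \<forall>l<s. (\<Sum>i\<in>UNIV. c k i * \<alpha> i l) = (if k = l then 1 else 0)"
    and Tsym: "\<forall>k l. T k l = T l k"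
    and Tz: "\<forall>i. (\<Sum>k<s. \<Sum>l<s. \<alpha> i k * T k l * \<alpha> i l) = 0"
    and kl: "k < s" "l < s"
  shows "T k l = 0"
proof -
  have z: "(\<Sum>k<s. \<Sum>l<s. \<alpha> i k * T k l * \<alpha> j l) = 0" for i j
    by (rule extreme_perturb[OF ext g1 Tsym Tz])
  have "0 = (\<Sum>i\<in>UNIV. \<Sum>j\<in>UNIV. c k i * (\<Sum>k<s. \<Sum>l<s. \<alpha> i k * T k l * \<alpha> j l) * c l j)"
    by (simp add: z)
  also have "\<dots> = (\<Sum>k'<s. \<Sum>l'<s. (\<Sum>i\<in>UNIV. c k i * \<alpha> i k') * T k' l' * (\<Sum>j\<in>UNIV. c l j * \<alpha> j l'))"
    by (rule bilin_coords)
  also have "\<dots> = (\<Sum>k'<s. \<Sum>l'<s. (if k = k' then 1 else 0) * T k' l' * (if l = l' then 1 else 0))"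
    using g2 kl by (intro sum.cong refl) simp
  also have "\<dots> = T k l" using kl by (rule delta2)
  finally show ?thesis by simp
qed



lemma sc_real_sum_entry: "(\<Sum>k\<in>I. \<Sum>l\<in>I. sc (of_real (f k l)) (G k l)) p q = (\<Sum>k\<in>I. \<Sum>l\<in>I. of_real (f k l) * G k l p q)"
  by (simp add: fun_sum_apply2 sc_def)

lemma lower_bound:
  fixes C :: "real^'n^'n"
  assumes ext: "C extreme_point_of elliptope" and fac: "cpsd_factorization (P_mat C) d"
  shows "2 ^ (rank C div 2) \<le> d"
proof -
  obtain P where d1: "d \<ge> 1" and Ppsd: "\<And>x. herm_psd d (P x)"
    and Ptr: "\<And>x y. complex_of_real (P_mat C $ x $ y) = tr_prod d (P x) (P y)"
    using fac unfolding cpsd_factorization_def by blast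
  have CE: "C \<in> elliptope" using ext by (simp add: extreme_point_of_def)
  have psd: "psd_real C" and diag: "\<And>i. C $ i $ i = 1" using CE by (auto simp: elliptope_def)
  define Pt where "Pt x = trunc d (P x)" for x
  have psdPt: "herm_psd d (Pt x)" for x using Ppsd by (simp add: Pt_def psd_trunc)
  have hPt: "herm (Pt x)" for x using herm_trunc[OF Ppsd] by (simp add: Pt_def)
  have tcPt: "tc d (Pt x)" for x by (simp add: Pt_def)
  have trPt: "tr d (mm d (Pt x) (Pt y)) = of_real (P_mat C $ x $ y)" for x y
    using Ptr[of x y] by (simp add: Pt_def tr_prod_eq[symmetric] tr_prod_trunc)
  define A where "A i = Pt (1, i)" for i
  define B where "B i = Pt (2, i)" for i
  have tAA: "tr d (mm d (A i) (A j)) = of_real (1/4 * (1 + C $ i $ j))" for i j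
    by (simp add: A_def trPt P_mat_entry blk_entry)
  have tBB: "tr d (mm d (B i) (B j)) = of_real (1/4 * (1 + C $ i $ j))" for i j
    by (simp add: B_def trPt P_mat_entry blk_entry)
  have tAB: "tr d (mm d (A i) (B j)) = of_real (1/4 * (1 - C $ i $ j))" for i j
    by (simp add: A_def B_def trPt P_mat_entry blk_entry)
  have tBA: "tr d (mm d (B i) (A j)) = of_real (1/4 * (1 - C $ i $ j))" for i j
    by (simp add: A_def B_def trPt P_mat_entry blk_entry)
  have tcA: "tc d (A i)" and tcB: "tc d (B i)" for i by (simp_all add: A_def B_def tcPt)
  have hA: "herm (A i)" and hB: "herm (B i)" for i by (simp_all add: A_def B_def hPt)
  define Qf where "Qf i = A i + B i" for i
  have tQQ: "tr d (mm d (Qf i) (Qf j)) = 1" for i j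
  proof -
    have "tr d (mm d (Qf i) (Qf j)) = of_real (1/4 * (1 + C $ i $ j) + 1/4 * (1 - C $ i $ j) + 1/4 * (1 - C $ i $ j) + 1/4 * (1 + C $ i $ j))"
      by (simp add: Qf_def mm_add_left mm_add_right tr_add tAA tBB tAB tBA)
    also have "\<dots> = 1" by (simp add: algebra_simps)
    finally show ?thesis .
  qed
  define i0 :: 'n where "i0 = undefined"
  define Q where "Q = Qf i0"
  have tcQf: "tc d (Qf i)" and hQf: "herm (Qf i)" for i by (simp_all add: Qf_def tcA tcB hA hB)
  have QfQ: "Qf i = Q" for i
  proof -
    let ?Z = "Qf i - Qf i0"
    have "tr d (mm d ?Z ?Z) = 0"
      by (simp add: mm_diff_left mm_diff_right tr_diff tQQ)
    then have "?Z = 0" using herm_zero_tr[of d ?Z] tcQf hQf by simp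
    then show ?thesis by (simp add: Q_def)
  qed
  have tcQ: "tc d Q" and hQ: "herm Q" by (simp_all add: Q_def tcQf hQf)
  have Qne: "Q \<noteq> 0"
  proof
    assume "Q = 0"
    then have "tr d (mm d (Qf i0) (Qf i0)) = 0" by (simp add: Q_def)
    then show False using tQQ by simp
  qed
  have AB0: "mm d (A i) (B i) = 0" for i
    using psd_orth[OF psdPt psdPt, of "(1,i)" "(2,i)"] tAB[of i i] diag[of i] by (simp add: A_def B_def)
  have BA0: "mm d (B i) (A i) = 0" for i
    using psd_orth[OF psdPt psdPt, of "(2,i)" "(1,i)"] tBA[of i i] diag[of i] by (simp add: A_def B_def)
  define X where "X i = A i - B i" for i
  have tcX: "tc d (X i)" and hX: "herm (X i)" for i by (simp_all add: X_def tcA tcB hA hB)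
  have tXX: "tr d (mm d (X i) (X j)) = of_real (C $ i $ j)" for i j
  proof -
    have "tr d (mm d (X i) (X j)) = of_real (1/4 * (1 + C $ i $ j) - 1/4 * (1 - C $ i $ j) - (1/4 * (1 - C $ i $ j) - 1/4 * (1 + C $ i $ j)))"
      by (simp add: X_def mm_diff_left mm_diff_right tr_diff tAA tBB tAB tBA)
    also have "\<dots> = of_real (C $ i $ j)" by (simp add: algebra_simps)
    finally show ?thesis .
  qed
  have XXQ: "mm d (X i) (X i) = mm d Q Q" for i
  proof -
    have "mm d (X i) (X i) = mm d (A i) (A i) + mm d (B i) (B i)"
      by (simp add: X_def mm_diff_left mm_diff_right AB0 BA0)
    also have "\<dots> = mm d (Qf i) (Qf i)"
      by (simp add: Qf_def mm_add_left mm_add_right AB0 BA0)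
    finally show ?thesis by (simp add: QfQ)
  qed
  obtain s :: nat and \<alpha> :: "'n \<Rightarrow> nat \<Rightarrow> real" and c :: "nat \<Rightarrow> 'n \<Rightarrow> real"
    where g1: "\<forall>i j. C $ i $ j = (\<Sum>k<s. \<alpha> i k * \<alpha> j k)"
      and g2: "\<forall>k<s. \<forall>l<s. (\<Sum>i\<in>UNIV. c k i * \<alpha> i l) = (if k = l then 1 else 0)"
      and g3: "rank C \<le> s"
    using gram_coords[OF psd] by blast
  define Y where "Y k = (\<Sum>i\<in>UNIV. sc (of_real (c k i)) (X i))" for k
  have tcY: "tc d (Y k)" and hY: "herm (Y k)" for k by (simp_all add: Y_def tcX hX)
  have sumC: "(\<Sum>j\<in>UNIV. c k j * C $ i $ j) = \<alpha> i k" if k: "k < s" for i k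
  proof -
    have "(\<Sum>j\<in>UNIV. c k j * C $ i $ j) = (\<Sum>j\<in>UNIV. \<Sum>l<s. \<alpha> i l * (c k j * \<alpha> j l))"
      using g1 by (simp add: sum_distrib_left mult.commute mult.left_commute)
    also have "\<dots> = (\<Sum>l<s. \<alpha> i l * (\<Sum>j\<in>UNIV. c k j * \<alpha> j l))"
      by (subst sum.swap) (simp add: sum_distrib_left)
    also have "\<dots> = (\<Sum>l<s. \<alpha> i l * (if k = l then 1 else 0))"
      using g2 k by (intro sum.cong refl) simp
    also have "\<dots> = \<alpha> i k" using k by (simp add: if_distrib[of "\<lambda>t. _ * t"] cong: if_cong)
    finally show ?thesis .
  qed
  have tXY: "tr d (mm d (X i) (Y k)) = of_real (\<alpha> i k)" if k: "k < s" for i k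
  proof -
    have "tr d (mm d (X i) (Y k)) = (\<Sum>j\<in>UNIV. of_real (c k j) * of_real (C $ i $ j))"
      by (simp add: Y_def mm_sum_right mm_sc_right tr_sum tr_sc tXX)
    also have "\<dots> = of_real (\<Sum>j\<in>UNIV. c k j * C $ i $ j)" by simp
    finally show ?thesis using sumC[OF k] by simp
  qed
  have tYX: "tr d (mm d (Y k) (X i)) = of_real (\<alpha> i k)" if k: "k < s" for i k
    using tXY[OF k] tr_mm_comm by metis
  have tYY: "tr d (mm d (Y k) (Y l)) = of_real (if k = l then 1 else 0)" if kl: "k < s" "l < s" for k l
  proof -
    have "tr d (mm d (Y k) (Y l)) = (\<Sum>i\<in>UNIV. of_real (c k i) * of_real (\<alpha> i l))"
      unfolding Y_def[of k] by (simp add: mm_sum_left mm_sc_left tr_sum tr_sc tXY[OF kl(2)])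
    also have "\<dots> = of_real (\<Sum>i\<in>UNIV. c k i * \<alpha> i l)" by simp
    finally show ?thesis using g2 kl by simp
  qed
  define W where "W i = (\<Sum>k\<in>{..<s}. sc (of_real (\<alpha> i k)) (Y k))" for i
  have sq1: "(\<Sum>k<s. \<alpha> i k * \<alpha> i k) = 1" for i using g1 diag by metis
  have sq1c: "(\<Sum>k<s. complex_of_real (\<alpha> i k * \<alpha> i k)) = 1" for i
    by (simp only: of_real_sum[symmetric] sq1 of_real_1)
  have Xexp: "X i = W i" for i
  proof -
    let ?Z = "X i - W i"
    have tXW: "tr d (mm d (X i) (W i)) = 1"
      by (simp add: W_def mm_sum_right mm_sc_right tr_sum tr_sc tXY sq1c flip: of_real_mult)
    have tWX: "tr d (mm d (W i) (X i)) = 1"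
      by (simp add: W_def mm_sum_left mm_sc_left tr_sum tr_sc tYX sq1c flip: of_real_mult)
    have tWW: "tr d (mm d (W i) (W i)) = 1"
    proof -
      have "tr d (mm d (W i) (W i)) = (\<Sum>k\<in>{..<s}. \<Sum>l\<in>{..<s}. of_real (\<alpha> i k * \<alpha> i l) * tr d (mm d (Y k) (Y l)))"
        by (simp add: W_def mm_lin_lin tr_sum tr_sc)
      also have "\<dots> = (\<Sum>k\<in>{..<s}. \<Sum>l\<in>{..<s}. of_real (\<alpha> i k) * of_real (\<alpha> i l) * (if k = l then 1 else 0))"
        by (intro sum.cong refl) (simp add: tYY)
      also have "\<dots> = (\<Sum>k\<in>{..<s}. of_real (\<alpha> i k) * of_real (\<alpha> i k))"
        by (rule delta_double_sum) simp
      also have "\<dots> = 1" using sq1c[of i] by (simp flip: of_real_mult)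
      finally show ?thesis .
    qed
    have "tr d (mm d ?Z ?Z) = 0"
      using tXX[of i i] diag[of i] tXW tWX tWW by (simp add: mm_diff_left mm_diff_right tr_diff)
    moreover have "tc d ?Z" by (simp add: W_def tcX tcY)
    moreover have "herm ?Z" by (simp add: W_def hX hY)
    ultimately have "?Z = 0" using herm_zero_tr by blast
    then show ?thesis by simp
  qed
  define R where "R = mm d Q Q"
  define Gm where "Gm k l = mm d (Y k) (Y l) + mm d (Y l) (Y k) - sc (2 * (if k = l then 1 else 0)) R" for k l
  have Gsym: "Gm k l = Gm l k" for k l by (simp add: Gm_def add.commute eq_commute[of k l])
  have Gsum: "(\<Sum>k\<in>{..<s}. \<Sum>l\<in>{..<s}. sc (of_real (\<alpha> i k * \<alpha> i l)) (Gm k l)) = 0" for i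
  proof -
    have e1: "(\<Sum>k\<in>{..<s}. \<Sum>l\<in>{..<s}. sc (of_real (\<alpha> i k * \<alpha> i l)) (mm d (Y k) (Y l))) = R"
      using XXQ[of i] Xexp[of i] by (simp add: W_def mm_lin_lin R_def)
    have e2: "(\<Sum>k\<in>{..<s}. \<Sum>l\<in>{..<s}. sc (of_real (\<alpha> i k * \<alpha> i l)) (mm d (Y l) (Y k))) = R"
      using e1 by (subst sum.swap) (simp add: mult.commute)
    have e3: "(\<Sum>k\<in>{..<s}. \<Sum>l\<in>{..<s}. sc (of_real (\<alpha> i k * \<alpha> i l)) (sc (2 * (if k = l then 1 else 0)) R)) = sc 2 R"
    proof -
      have inner: "(\<Sum>l\<in>{..<s}. of_real (\<alpha> i k * \<alpha> i l) * (2 * (if k = l then 1 else 0))) = (if k < s then 2 * complex_of_real (\<alpha> i k * \<alpha> i k) else 0)" for k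
        by (cases "k < s") (simp_all add: if_distrib[of "\<lambda>t. _ * t"] cong: if_cong)
      have "(\<Sum>k\<in>{..<s}. \<Sum>l\<in>{..<s}. sc (of_real (\<alpha> i k * \<alpha> i l)) (sc (2 * (if k = l then 1 else 0)) R))
          = sc (\<Sum>k\<in>{..<s}. \<Sum>l\<in>{..<s}. of_real (\<alpha> i k * \<alpha> i l) * (2 * (if k = l then 1 else 0))) R"
        by (simp only: sc_sc sum_sc)
      also have "(\<Sum>k\<in>{..<s}. \<Sum>l\<in>{..<s}. of_real (\<alpha> i k * \<alpha> i l) * (2 * (if k = l then 1 else 0))) = (2::complex)"
        unfolding inner using sq1c[of i] by (simp add: sum_distrib_left[symmetric])
      finally show ?thesis .
    qed
    have "(\<Sum>k\<in>{..<s}. \<Sum>l\<in>{..<s}. sc (of_real (\<alpha> i k * \<alpha> i l)) (Gm k l)) = R + R - sc 2 R"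
      unfolding Gm_def sc_add sc_diff sum.distrib sum_subtractf e1 e2 e3 ..
    also have "\<dots> = 0" by (simp add: add_self)
    finally show ?thesis .
  qed
  have Gz: "Gm k l = 0" if kl: "k < s" "l < s" for k l
  proof (rule HOL.ext, rule HOL.ext)
    fix p q
    have re: "Re (Gm k l p q) = 0"
    proof (rule T_zero[OF ext g1 g2, of "\<lambda>k l. Re (Gm k l p q)"])
      show "\<forall>k l. Re (Gm k l p q) = Re (Gm l k p q)" using Gsym by simp
      show "\<forall>i. (\<Sum>k<s. \<Sum>l<s. \<alpha> i k * Re (Gm k l p q) * \<alpha> i l) = 0"
      proof
        fix i
        have "(\<Sum>k<s. \<Sum>l<s. \<alpha> i k * Re (Gm k l p q) * \<alpha> i l) = Re ((\<Sum>k\<in>{..<s}. \<Sum>l\<in>{..<s}. sc (of_real (\<alpha> i k * \<alpha> i l)) (Gm k l)) p q)"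
          unfolding sc_real_sum_entry by (simp add: Re_sum mult_ac)
        then show "(\<Sum>k<s. \<Sum>l<s. \<alpha> i k * Re (Gm k l p q) * \<alpha> i l) = 0" using Gsum[of i] by simp
      qed
    qed (use kl in auto)
    have im: "Im (Gm k l p q) = 0"
    proof (rule T_zero[OF ext g1 g2, of "\<lambda>k l. Im (Gm k l p q)"])
      show "\<forall>k l. Im (Gm k l p q) = Im (Gm l k p q)" using Gsym by simp
      show "\<forall>i. (\<Sum>k<s. \<Sum>l<s. \<alpha> i k * Im (Gm k l p q) * \<alpha> i l) = 0"
      proof
        fix i
        have "(\<Sum>k<s. \<Sum>l<s. \<alpha> i k * Im (Gm k l p q) * \<alpha> i l) = Im ((\<Sum>k\<in>{..<s}. \<Sum>l\<in>{..<s}. sc (of_real (\<alpha> i k * \<alpha> i l)) (Gm k l)) p q)"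
          unfolding sc_real_sum_entry by (simp add: Im_sum mult_ac)
        then show "(\<Sum>k<s. \<Sum>l<s. \<alpha> i k * Im (Gm k l p q) * \<alpha> i l) = 0" using Gsum[of i] by simp
      qed
    qed (use kl in auto)
    show "Gm k l p q = 0 p q" using re im by (simp add: complex_eq_iff)
  qed
  define m where "m = 2 * (rank C div 2)"
  have ms: "m \<le> s" using g3 by (simp add: m_def)
  have cl: "cliff d m Y Q"
  proof
    show "tc d (Y k)" "herm (Y k)" for k by (simp_all add: tcY hY)
    show "tc d Q" "herm Q" "Q \<noteq> 0" by (fact tcQ hQ Qne)+
    show "mm d (Y k) (Y l) + mm d (Y l) (Y k) = sc (2 * (if k = l then 1 else 0)) (mm d Q Q)"
      if "k < m" "l < m" for k l
      using Gz[of k l] that ms by (simp add: Gm_def R_def)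
    show "even m" by (simp add: m_def)
  qed
  have "2 ^ m \<le> d ^ 2" by (rule cliff.count_bound[OF cl])
  moreover have "(2::nat) ^ m = (2 ^ (rank C div 2)) ^ 2"
    unfolding m_def by (metis power_mult mult.commute)
  ultimately have "(2 ^ (rank C div 2)) ^ 2 \<le> d ^ 2" by simp
  then show ?thesis by (rule power2_le_imp_le) simp
qed



theorem theorem3p1:
  fixes C :: "real^'n^'n"
  assumes "C extreme_point_of elliptope"
  shows "cpsd (P_mat C) \<and> cpsd_rank (P_mat C) \<ge> 2 ^ (rank C div 2)"
proof -
  have CE: "C \<in> elliptope" using assms by (simp add: extreme_point_of_def)
  have Csym: "C $ i $ j = C $ j $ i" for i j
  proof -
    have "transpose C = C" using CE by (simp add: elliptope_def psd_real_def)
    then have "transpose C $ j $ i = C $ j $ i" by simp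
    then show ?thesis by (simp add: transpose_def)
  qed
  have ex: "\<exists>d. cpsd_factorization (P_mat C) d" using cpsd_exists[OF CE] .
  have tr: "transpose (P_mat C) = P_mat C"
  proof -
    have "P_mat C $ y $ x = P_mat C $ x $ y" for x y :: "2 \<times> 'n"
      unfolding P_mat_entry blk_entry using Csym[of "snd x" "snd y"]
      by (cases "fst x = fst y") auto
    then show ?thesis by (simp add: vec_eq_iff transpose_def)
  qed
  have "cpsd (P_mat C)" using ex tr by (simp add: cpsd_def)
  moreover have "cpsd_factorization (P_mat C) (cpsd_rank (P_mat C))"
    unfolding cpsd_rank_def using ex by (rule LeastI_ex)
  then have "2 ^ (rank C div 2) \<le> cpsd_rank (P_mat C)" by (rule lower_bound[OF assms])
  ultimately show ?thesis by simp
qed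


end
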